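(* Let $d_1,\dots,d_n\in\mathbb N$ and $M'_{(d_i)}=\{\mathbf m\in M_{(d_i);(d_j)}: m_{i,j}=0 \text{ for all } j<i-1\}$. (1) $M'_{(d_i)}$ is a lower ideal of the poset $(M_{(d_i);(d_j)},\le)$. (2) If $\mathbf m\in M'_{(d_i)}$, then $m_{\le i,\ge j}=d_j+d_{j+1}+\dots+d_i$ for all $i\ge j$. (3) For $\mathbf m,\mathbf m'\in M'_{(d_i)}$, $\mathbf m\le\mathbf m'$ if and only if $m_{\le i,\ge j}\le m'_{\le i,\ge j}$ for all $i<j$. (4) If $\mathbf m\in M'_{(d_i)}$, then $m_{i,i-1}=m_{\le i-1,\ge i}$ for all $i\in[2,n]$. (5) The map $\Phi$ sending a multisegment to its matrix is a bijection from $M_{(d_i)}$ onto $M'_{(d_i)}$.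
   Context: All indices range over $[1,n]$. $M_{(d_i);(d_j)}$ is the set of $n\times n$ matrices with entries in $\mathbb N$ whose $i$-th row sum and $i$-th column sum both equal $d_i$. Partial sums: $m_{\le i,\ge j}=\sum_{i'\le i,\,j'\ge j}m_{i',j'}$. Partial order: partition $[1,d]$ ($d=\sum d_i$) into consecutive intervals $B_1<\dots<B_n$ with $|B_i|=d_i$, let $S_{(d_i)}\subseteq S_d$ be the subgroup preserving each $B_i$; the map $\psi(w)_{i,j}=|w(B_i)\cap B_j|$ induces a bijection $S_{(d_i)}\backslash S_d/S_{(d_i)}\to M_{(d_i);(d_j)}$; let $w_{\mathbf m}$ be the longest element of the double coset of $\mathbf m$, and set $\mathbf m\le\mathbf m'$ iff $w_{\mathbf m}\le w_{\mathbf m'}$ in Bruhat order of $S_d$ (generated by adjacent transpositions). A segment is an integer interval $[i,j]$, $i\le j$; $M_{(d_i)}$ is the set of multisegments (finite formal sums of segments) in which each $i\in[1,n]$ occurs exactly $d_i$ times as an element of a segment (and no integer outside $[1,n]$ occurs). $\Phi(\mathbf m)$ is the $n\times n$ matrix with entry at $(i,j)$: the multiplicity of $[i,j]$ in $\mathbf m$ if $i\le j$; the number of segments $[k,l]$ of $\mathbf m$ (with multiplicity) with $k\le j$ and $l\ge i$ if $j=i-1$; and $0$ if $j<i-1$. *)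

theory Defs
  imports "HOL-Combinatorics.Combinatorics" "HOL-Library.Multiset"
begin

text \<open>Matrices are functions nat => nat => nat, indices in [1,n]; entries outside
  [1,n] x [1,n] are required to be 0 (canonical representation).\<close>

definition Mmat :: "nat \<Rightarrow> (nat \<Rightarrow> nat) \<Rightarrow> (nat \<Rightarrow> nat \<Rightarrow> nat) set" where
  "Mmat n d = {m. (\<forall>i j. (i \<notin> {1..n} \<or> j \<notin> {1..n}) \<longrightarrow> m i j = 0)
      \<and> (\<forall>i\<in>{1..n}. (\<Sum>j=1..n. m i j) = d i \<and> (\<Sum>j=1..n. m j i) = d i)}"

definition Mprime :: "nat \<Rightarrow> (nat \<Rightarrow> nat) \<Rightarrow> (nat \<Rightarrow> nat \<Rightarrow> nat) set" where
  "Mprime n d = {m \<in> Mmat n d. \<forall>i\<in>{1..n}. \<forall>j\<in>{1..n}. j + 1 < i \<longrightarrow> m i j = 0}"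

definition psum :: "nat \<Rightarrow> (nat \<Rightarrow> nat \<Rightarrow> nat) \<Rightarrow> nat \<Rightarrow> nat \<Rightarrow> nat" where
  "psum n m i j = (\<Sum>i'\<in>{1..i}. \<Sum>j'\<in>{j..n}. m i' j')"

definition dtot :: "nat \<Rightarrow> (nat \<Rightarrow> nat) \<Rightarrow> nat" where
  "dtot n d = (\<Sum>k=1..n. d k)"

definition block :: "(nat \<Rightarrow> nat) \<Rightarrow> nat \<Rightarrow> nat set" where
  "block d i = {(\<Sum>k=1..<i. d k) + 1 .. (\<Sum>k=1..i. d k)}"

definition psi :: "nat \<Rightarrow> (nat \<Rightarrow> nat) \<Rightarrow> (nat \<Rightarrow> nat) \<Rightarrow> nat \<Rightarrow> nat \<Rightarrow> nat" where
  "psi n d w i j = (if i \<in> {1..n} \<and> j \<in> {1..n} then card (w ` block d i \<inter> block d j) else 0)"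

definition coxlen :: "nat \<Rightarrow> (nat \<Rightarrow> nat) \<Rightarrow> nat" where
  "coxlen D w = (LEAST k. \<exists>ts. length ts = k \<and> set ts \<subseteq> {1..<D} \<and>
      w = foldr (\<lambda>i f. transpose i (Suc i) \<circ> f) ts id)"

definition bruhat_step :: "nat \<Rightarrow> (nat \<Rightarrow> nat) \<Rightarrow> (nat \<Rightarrow> nat) \<Rightarrow> bool" where
  "bruhat_step D u w \<longleftrightarrow> u permutes {1..D} \<and>
     (\<exists>a\<in>{1..D}. \<exists>b\<in>{1..D}. a \<noteq> b \<and> w = u \<circ> transpose a b \<and> coxlen D u < coxlen D w)"

definition bruhat_le :: "nat \<Rightarrow> (nat \<Rightarrow> nat) \<Rightarrow> (nat \<Rightarrow> nat) \<Rightarrow> bool" where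
  "bruhat_le D = (bruhat_step D)\<^sup>*\<^sup>*"

definition dcoset :: "nat \<Rightarrow> (nat \<Rightarrow> nat) \<Rightarrow> (nat \<Rightarrow> nat \<Rightarrow> nat) \<Rightarrow> (nat \<Rightarrow> nat) set" where
  "dcoset n d m = {w. w permutes {1..dtot n d} \<and> psi n d w = m}"

definition longest :: "nat \<Rightarrow> (nat \<Rightarrow> nat) \<Rightarrow> (nat \<Rightarrow> nat \<Rightarrow> nat) \<Rightarrow> (nat \<Rightarrow> nat)" where
  "longest n d m = (THE w. w \<in> dcoset n d m \<and>
      (\<forall>w'\<in>dcoset n d m. coxlen (dtot n d) w' \<le> coxlen (dtot n d) w))"

definition mat_le :: "nat \<Rightarrow> (nat \<Rightarrow> nat) \<Rightarrow> (nat \<Rightarrow> nat \<Rightarrow> nat) \<Rightarrow> (nat \<Rightarrow> nat \<Rightarrow> nat) \<Rightarrow> bool" where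
  "mat_le n d m m' = bruhat_le (dtot n d) (longest n d m) (longest n d m')"

text \<open>Multisegments: finite multisets of integer intervals [a,b] (a <= b), as pairs (a,b).\<close>
definition Mseg :: "nat \<Rightarrow> (nat \<Rightarrow> nat) \<Rightarrow> (int \<times> int) multiset set" where
  "Mseg n d = {ms. (\<forall>s\<in>#ms. fst s \<le> snd s) \<and>
      (\<forall>k::int. size (filter_mset (\<lambda>(a,b). a \<le> k \<and> k \<le> b) ms)
                 = (if 1 \<le> k \<and> k \<le> int n then d (nat k) else 0))}"

definition Phi :: "nat \<Rightarrow> (int \<times> int) multiset \<Rightarrow> nat \<Rightarrow> nat \<Rightarrow> nat" where
  "Phi n ms i j = (if i \<in> {1..n} \<and> j \<in> {1..n} then
       (if i \<le> j then count ms (int i, int j)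
        else if j + 1 = i then size (filter_mset (\<lambda>(k,l). k \<le> int j \<and> int i \<le> l) ms)
        else 0)
     else 0)"

end

theory Submission
  imports Defs "HOL-Library.Disjoint_Sets"
begin

lemma sum_split_at:
  fixes f :: "nat \<Rightarrow> nat"
  assumes "1 \<le> j" "j \<le> Suc n"
  shows "(\<Sum>x=1..n. f x) = (\<Sum>x=1..<j. f x) + (\<Sum>x=j..n. f x)"
proof -
  have "{1..n} = {1..<j} \<union> {j..n}" using assms by auto
  moreover have "{1..<j} \<inter> {j..n} = {}" by auto
  ultimately show ?thesis by (simp add: sum.union_disjoint)
qed

lemma sum_split_at2:
  fixes f :: "nat \<Rightarrow> nat"
  assumes "k \<le> n"
  shows "(\<Sum>x=1..n. f x) = (\<Sum>x=1..k. f x) + (\<Sum>x=Suc k..n. f x)"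
  using sum_split_at[of "Suc k" n f] assms by (simp add: atLeastLessThanSuc_atLeastAtMost)

lemma Mmat_row: "m \<in> Mmat n d \<Longrightarrow> i \<in> {1..n} \<Longrightarrow> (\<Sum>j=1..n. m i j) = d i"
  by (simp add: Mmat_def)
lemma Mmat_col: "m \<in> Mmat n d \<Longrightarrow> i \<in> {1..n} \<Longrightarrow> (\<Sum>j=1..n. m j i) = d i"
  by (simp add: Mmat_def)
lemma Mmat_out: "m \<in> Mmat n d \<Longrightarrow> i \<notin> {1..n} \<or> j \<notin> {1..n} \<Longrightarrow> m i j = 0"
  by (simp add: Mmat_def)

lemma key_identity:
  assumes m: "m \<in> Mmat n d" and k: "k \<le> n" and j: "1 \<le> j" "j \<le> Suc n"
  shows "psum n m k j + (\<Sum>j'=1..<j. d j') = (\<Sum>i=1..k. d i) + (\<Sum>i=Suc k..n. \<Sum>j'=1..<j. m i j')"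
proof -
  have r: "(\<Sum>i=1..k. d i) = (\<Sum>i=1..k. \<Sum>j'=1..<j. m i j') + psum n m k j"
  proof -
    have "(\<Sum>i=1..k. d i) = (\<Sum>i=1..k. \<Sum>j'=1..n. m i j')"
      using k Mmat_row[OF m] by (intro sum.cong) auto
    also have "\<dots> = (\<Sum>i=1..k. (\<Sum>j'=1..<j. m i j') + (\<Sum>j'=j..n. m i j'))"
      using sum_split_at[OF j] by simp
    finally show ?thesis by (simp add: sum.distrib psum_def)
  qed
  have c: "(\<Sum>j'=1..<j. d j') = (\<Sum>i=1..k. \<Sum>j'=1..<j. m i j') + (\<Sum>i=Suc k..n. \<Sum>j'=1..<j. m i j')"
  proof -
    have "(\<Sum>j'=1..<j. d j') = (\<Sum>j'=1..<j. \<Sum>i=1..n. m i j')"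
      using j Mmat_col[OF m] by (intro sum.cong) auto
    also have "\<dots> = (\<Sum>i=1..n. \<Sum>j'=1..<j. m i j')" by (rule sum.swap)
    also have "\<dots> = (\<Sum>i=1..k. \<Sum>j'=1..<j. m i j') + (\<Sum>i=Suc k..n. \<Sum>j'=1..<j. m i j')"
      by (rule sum_split_at2[OF k])
    finally show ?thesis .
  qed
  show ?thesis using r c by simp
qed

lemma Mprime_zero: "m \<in> Mprime n d \<Longrightarrow> c + 1 < r \<Longrightarrow> m r c = 0"
  unfolding Mprime_def Mmat_def by (cases "r \<in> {1..n} \<and> c \<in> {1..n}") auto

lemma Mprime_Mmat: "m \<in> Mprime n d \<Longrightarrow> m \<in> Mmat n d"
  by (simp add: Mprime_def)

lemma part2:
  assumes m: "m \<in> Mprime n d" and ij: "1 \<le> j" "j \<le> i" "i \<le> n"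
  shows "psum n m i j = (\<Sum>k=j..i. d k)"
proof -
  have Q: "(\<Sum>r=Suc i..n. \<Sum>c=1..<j. m r c) = 0"
    using ij by (auto intro!: sum.neutral Mprime_zero[OF m])
  have "psum n m i j + (\<Sum>j'=1..<j. d j') = (\<Sum>k=1..i. d k)"
    using key_identity[OF Mprime_Mmat[OF m], of i j] ij Q by simp
  moreover have "(\<Sum>k=1..i. d k) = (\<Sum>k=1..<j. d k) + (\<Sum>k=j..i. d k)"
    using sum_split_at[of j i d] ij by simp
  ultimately show ?thesis by simp
qed

lemma part4:
  assumes m: "m \<in> Mprime n d" and i: "2 \<le> i" "i \<le> n"
  shows "m i (i - 1) = psum n m (i - 1) i"
proof -
  have Q: "(\<Sum>r=Suc (i-1)..n. \<Sum>c=1..<i. m r c) = m i (i - 1)"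
  proof -
    have "(\<Sum>r=Suc (i-1)..n. \<Sum>c=1..<i. m r c) = (\<Sum>r=i..n. \<Sum>c=1..<i. m r c)"
      using i by simp
    also have "\<dots> = (\<Sum>c=1..<i. m i c) + (\<Sum>r=Suc i..n. \<Sum>c=1..<i. m r c)"
      using i by (subst sum.atLeast_Suc_atMost) auto
    also have "(\<Sum>r=Suc i..n. \<Sum>c=1..<i. m r c) = 0"
      using i by (auto intro!: sum.neutral Mprime_zero[OF m])
    also have "(\<Sum>c=1..<i. m i c) = (\<Sum>c=1..<i-1. m i c) + m i (i - 1)"
    proof -
      have "{1..<i} = insert (i-1) {1..<i-1}" using i by auto
      thus ?thesis by simp
    qed
    also have "(\<Sum>c=1..<i-1. m i c) = 0"
      using i by (auto intro!: sum.neutral Mprime_zero[OF m])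
    finally show ?thesis by simp
  qed
  have "psum n m (i-1) i + (\<Sum>j'=1..<i. d j') = (\<Sum>k=1..i-1. d k) + m i (i - 1)"
    using key_identity[OF Mprime_Mmat[OF m], of "i-1" i] i Q by simp
  moreover have "(\<Sum>j'=1..<i. d j') = (\<Sum>k=1..i-1. d k)"
    using i by (intro sum.cong) auto
  ultimately show ?thesis by simp
qed


lemma seg_in:
  assumes ms: "ms \<in> Mseg n d" and s: "s \<in># ms"
  shows "1 \<le> fst s \<and> fst s \<le> snd s \<and> snd s \<le> int n"
proof -
  obtain a b where ab: "s = (a,b)" by force
  have le: "a \<le> b" using ms s ab by (auto simp: Mseg_def)
  have cnt: "\<And>k. size (filter_mset (\<lambda>(a,b). a \<le> k \<and> k \<le> b) ms)
                 = (if 1 \<le> k \<and> k \<le> int n then d (nat k) else 0)"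
    using ms by (simp add: Mseg_def)
  have pos: "\<And>k. a \<le> k \<Longrightarrow> k \<le> b \<Longrightarrow> size (filter_mset (\<lambda>(a,b). a \<le> k \<and> k \<le> b) ms) > 0"
  proof -
    fix k assume "a \<le> k" "k \<le> b"
    hence "s \<in># filter_mset (\<lambda>(a,b). a \<le> k \<and> k \<le> b) ms" using s ab by auto
    thus "size (filter_mset (\<lambda>(a,b). a \<le> k \<and> k \<le> b) ms) > 0"
      by (metis gr0I size_eq_0_iff_empty empty_iff set_mset_empty)
  qed
  have "1 \<le> a \<and> a \<le> int n" using pos[of a] cnt[of a] le by (auto split: if_splits)
  moreover have "1 \<le> b \<and> b \<le> int n" using pos[of b] cnt[of b] le by (auto split: if_splits)
  ultimately show ?thesis using ab le by simp
qed

definition IP :: "nat \<Rightarrow> (int \<times> int) set" where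
  "IP n = (\<lambda>(i,j). (int i, int j)) ` ({1..n} \<times> {1..n})"

lemma size_filter_sum:
  assumes fin: "finite S" and sub: "set_mset ms \<subseteq> S"
  shows "size (filter_mset Q ms) = (\<Sum>s\<in>S. if Q s then count ms s else 0)"
proof -
  have "size (filter_mset Q ms) = (\<Sum>s\<in>set_mset (filter_mset Q ms). count (filter_mset Q ms) s)"
    by (simp add: size_multiset_overloaded_eq)
  also have "\<dots> = (\<Sum>s\<in>S. count (filter_mset Q ms) s)"
    using fin sub by (intro sum.mono_neutral_left) auto
  finally show ?thesis by simp
qed

lemma IP_sum:
  "(\<Sum>s\<in>IP n. f s) = (\<Sum>i=1..n. \<Sum>j=1..n. f (int i, int j))"
proof -
  have inj: "inj_on (\<lambda>(i::nat,j::nat). (int i, int j)) ({1..n} \<times> {1..n})"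
    by (auto simp: inj_on_def)
  have "(\<Sum>s\<in>IP n. f s) = (\<Sum>p\<in>{1..n} \<times> {1..n}. f (int (fst p), int (snd p)))"
    unfolding IP_def by (subst sum.reindex[OF inj]) (rule sum.cong[OF refl], clarsimp)
  also have "\<dots> = (\<Sum>i=1..n. \<Sum>j=1..n. f (int i, int j))"
    by (simp add: sum.cartesian_product case_prod_beta)
  finally show ?thesis .
qed

lemma size_filter_dsum:
  assumes "set_mset ms \<subseteq> IP n"
  shows "size (filter_mset Q ms) =
     (\<Sum>i=1..n. \<Sum>j=1..n. if Q (int i, int j) then count ms (int i, int j) else 0)"
proof -
  have "finite (IP n)" by (simp add: IP_def)
  from size_filter_sum[OF this assms] IP_sum show ?thesis by simp
qed

lemma Mseg_sub: "ms \<in> Mseg n d \<Longrightarrow> set_mset ms \<subseteq> IP n"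
proof
  fix s assume ms: "ms \<in> Mseg n d" and "s \<in> set_mset ms"
  hence h: "1 \<le> fst s \<and> fst s \<le> snd s \<and> snd s \<le> int n" using seg_in by blast
  hence "s = (\<lambda>(i,j). (int i, int j)) (nat (fst s), nat (snd s))" by auto
  moreover have "(nat (fst s), nat (snd s)) \<in> {1..n} \<times> {1..n}" using h by auto
  ultimately show "s \<in> IP n" unfolding IP_def by blast
qed

lemma Mseg_d:
  assumes "ms \<in> Mseg n d" "k \<in> {1..n}"
  shows "d k = (\<Sum>i=1..n. \<Sum>j=1..n. if i \<le> k \<and> k \<le> j then count ms (int i, int j) else 0)"
proof -
  have "size (filter_mset (\<lambda>(a,b). a \<le> int k \<and> int k \<le> b) ms) = d k"
    using assms by (auto simp: Mseg_def)
  thus ?thesis using size_filter_dsum[OF Mseg_sub[OF assms(1)]] by simp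
qed

lemma dsum_delta_row:
  fixes g :: "nat \<Rightarrow> nat \<Rightarrow> nat"
  assumes "i \<in> {1..n}"
  shows "(\<Sum>i'=1..n. \<Sum>j=1..n. if i' = i \<and> P j then g i' j else 0) = (\<Sum>j=1..n. if P j then g i j else 0)"
proof -
  have "(\<Sum>i'=1..n. \<Sum>j=1..n. if i' = i \<and> P j then g i' j else 0)
      = (\<Sum>i'=1..n. if i' = i then (\<Sum>j=1..n. if P j then g i' j else 0) else 0)"
    by (intro sum.cong) auto
  also have "\<dots> = (\<Sum>j=1..n. if P j then g i j else 0)" using assms by (simp add: sum.delta)
  finally show ?thesis .
qed

lemma dsum_delta_col:
  fixes g :: "nat \<Rightarrow> nat \<Rightarrow> nat"
  assumes "j \<in> {1..n}"
  shows "(\<Sum>i=1..n. \<Sum>j'=1..n. if j' = j \<and> P i then g i j' else 0) = (\<Sum>i=1..n. if P i then g i j else 0)"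
proof -
  have "(\<Sum>i=1..n. \<Sum>j'=1..n. if j' = j \<and> P i then g i j' else 0)
      = (\<Sum>i=1..n. if P i then (\<Sum>j'=1..n. if j' = j then g i j' else 0) else 0)"
    by (intro sum.cong) auto
  also have "\<dots> = (\<Sum>i=1..n. if P i then g i j else 0)" using assms by (intro sum.cong refl) (auto simp: sum.delta)
  finally show ?thesis .
qed

lemma int_le_lt_suc: "((k::int) \<le> int j) = (k < 1 + int j)" by auto

lemma Phi_row:
  assumes ms: "ms \<in> Mseg n d" and i: "i \<in> {1..n}"
  shows "(\<Sum>j=1..n. Phi n ms i j) = d i"
proof -
  define c where "c a b = count ms (int a, int b)" for a b
  define X where "X = size (filter_mset (\<lambda>(k,l). k < int i \<and> int i \<le> l) ms)"
  have a: "(\<Sum>j=1..n. Phi n ms i j) = (\<Sum>j=1..n. (if i \<le> j then c i j else 0) + (if Suc j = i then X else 0))"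
    using i by (intro sum.cong) (auto simp: Phi_def c_def X_def int_le_lt_suc)
  have b: "(\<Sum>j=1..n. (if Suc j = i then X else 0)) = (if 2 \<le> i then X else 0)"
  proof -
    have "(\<Sum>j=1..n. (if Suc j = i then X else 0)) = (\<Sum>j=1..n. (if j = i - 1 then X else 0))"
      using i by (intro sum.cong) auto
    also have "\<dots> = (if 2 \<le> i then X else 0)" using i by (auto simp: sum.delta)
    finally show ?thesis .
  qed
  have cX0: "X = (\<Sum>i'=1..n. \<Sum>j=1..n. if int i' < int i \<and> int i \<le> int j then c i' j else 0)"
    unfolding X_def c_def using size_filter_dsum[OF Mseg_sub[OF ms]] by simp
  have cX: "X = (\<Sum>i'=1..n. \<Sum>j=1..n. if i' < i \<and> i \<le> j then c i' j else 0)"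
    unfolding cX0 by (simp only: of_nat_le_iff of_nat_less_iff)
  have dd: "(\<Sum>j=1..n. if i \<le> j then c i j else 0) = (\<Sum>i'=1..n. \<Sum>j=1..n. if i' = i \<and> i \<le> j then c i' j else 0)"
    using dsum_delta_row[OF i, of "\<lambda>j. i \<le> j" c] by simp
  have e: "d i = (\<Sum>i'=1..n. \<Sum>j=1..n. if i' \<le> i \<and> i \<le> j then c i' j else 0)"
    unfolding c_def using Mseg_d[OF ms i] by simp
  show ?thesis
  proof (cases "2 \<le> i")
    case True
    have "d i = (\<Sum>i'=1..n. \<Sum>j=1..n. (if i' = i \<and> i \<le> j then c i' j else 0) + (if i' < i \<and> i \<le> j then c i' j else 0))"
      unfolding e by (intro sum.cong refl) auto
    also have "\<dots> = (\<Sum>j=1..n. if i \<le> j then c i j else 0) + X"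
      unfolding cX dd by (simp add: sum.distrib)
    finally show ?thesis using a b True by (simp add: sum.distrib)
  next
    case False
    hence i1: "i = 1" using i by auto
    have "d i = (\<Sum>i'=1..n. \<Sum>j=1..n. (if i' = i \<and> i \<le> j then c i' j else 0))"
      unfolding e using i1 by (intro sum.cong refl) auto
    thus ?thesis using a b False dd by (simp add: sum.distrib)
  qed
qed

lemma Phi_col:
  assumes ms: "ms \<in> Mseg n d" and j: "j \<in> {1..n}"
  shows "(\<Sum>i=1..n. Phi n ms i j) = d j"
proof -
  define c where "c a b = count ms (int a, int b)" for a b
  define X where "X = size (filter_mset (\<lambda>(k,l). k \<le> int j \<and> int (Suc j) \<le> l) ms)"
  have a: "(\<Sum>i=1..n. Phi n ms i j) = (\<Sum>i=1..n. (if i \<le> j then c i j else 0) + (if i = Suc j then X else 0))"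
    using j by (intro sum.cong) (auto simp: Phi_def c_def X_def)
  have b: "(\<Sum>i=1..n. (if i = Suc j then X else 0)) = (if j < n then X else 0)"
    using j by (simp add: sum.delta)
  have cX0: "X = (\<Sum>i'=1..n. \<Sum>j'=1..n. if int i' \<le> int j \<and> int (Suc j) \<le> int j' then c i' j' else 0)"
    unfolding X_def c_def using size_filter_dsum[OF Mseg_sub[OF ms]] by simp
  have cX: "X = (\<Sum>i'=1..n. \<Sum>j'=1..n. if i' \<le> j \<and> Suc j \<le> j' then c i' j' else 0)"
    unfolding cX0 by (simp only: of_nat_le_iff)
  have dd: "(\<Sum>i=1..n. if i \<le> j then c i j else 0) = (\<Sum>i'=1..n. \<Sum>j'=1..n. if j' = j \<and> i' \<le> j then c i' j' else 0)"
    using dsum_delta_col[OF j, of "\<lambda>i. i \<le> j" c] by simp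
  have e: "d j = (\<Sum>i'=1..n. \<Sum>j'=1..n. if i' \<le> j \<and> j \<le> j' then c i' j' else 0)"
    unfolding c_def using Mseg_d[OF ms j] by simp
  show ?thesis
  proof (cases "j < n")
    case True
    have "d j = (\<Sum>i'=1..n. \<Sum>j'=1..n. (if j' = j \<and> i' \<le> j then c i' j' else 0) + (if i' \<le> j \<and> Suc j \<le> j' then c i' j' else 0))"
      unfolding e by (intro sum.cong refl) auto
    also have "\<dots> = (\<Sum>i=1..n. if i \<le> j then c i j else 0) + X"
      unfolding cX dd by (simp add: sum.distrib)
    finally show ?thesis using a b True by (simp add: sum.distrib)
  next
    case False
    hence jn: "j = n" using j by auto
    have "d j = (\<Sum>i'=1..n. \<Sum>j'=1..n. (if j' = j \<and> i' \<le> j then c i' j' else 0))"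
      unfolding e using jn by (intro sum.cong refl) auto
    thus ?thesis using a b False dd by (simp add: sum.distrib)
  qed
qed

lemma rect_sum:
  fixes g :: "nat \<Rightarrow> nat \<Rightarrow> nat"
  assumes "a \<le> n" "1 \<le> b"
  shows "(\<Sum>i=1..n. \<Sum>j=1..n. if i \<le> a \<and> b \<le> j then g i j else 0) = (\<Sum>i=1..a. \<Sum>j=b..n. g i j)"
proof -
  have inner: "(\<Sum>j=1..n. if b \<le> j then g i j else 0) = (\<Sum>j=b..n. g i j)" for i
  proof -
    have "{j\<in>{1..n}. b \<le> j} = {b..n}" using assms by auto
    thus ?thesis by (simp add: sum.inter_filter[symmetric])
  qed
  have "(\<Sum>i=1..n. \<Sum>j=1..n. if i \<le> a \<and> b \<le> j then g i j else 0)
     = (\<Sum>i=1..n. if i \<le> a then (\<Sum>j=1..n. if b \<le> j then g i j else 0) else 0)"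
    by (intro sum.cong) auto
  also have "\<dots> = (\<Sum>i=1..n. if i \<le> a then (\<Sum>j=b..n. g i j) else 0)"
    by (simp only: inner)
  also have "\<dots> = (\<Sum>i=1..a. \<Sum>j=b..n. g i j)"
  proof -
    have "{i\<in>{1..n}. i \<le> a} = {1..a}" using assms by auto
    thus ?thesis by (simp add: sum.inter_filter[symmetric])
  qed
  finally show ?thesis .
qed

lemma Phi_in:
  assumes ms: "ms \<in> Mseg n d"
  shows "Phi n ms \<in> Mprime n d"
  using Phi_row[OF ms] Phi_col[OF ms]
  unfolding Mprime_def Mmat_def by (auto simp: Phi_def)

lemma Mseg_count_out:
  assumes ms: "ms \<in> Mseg n d" and s: "\<not> (1 \<le> fst s \<and> fst s \<le> snd s \<and> snd s \<le> int n)"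
  shows "count ms s = 0"
  using seg_in[OF ms] s by (meson not_in_iff)

lemma Phi_inj: "inj_on (Phi n) (Mseg n d)"
proof (rule inj_onI)
  fix ms1 ms2 assume m1: "ms1 \<in> Mseg n d" and m2: "ms2 \<in> Mseg n d" and eq: "Phi n ms1 = Phi n ms2"
  show "ms1 = ms2"
  proof (rule multiset_eqI)
    fix s :: "int \<times> int"
    show "count ms1 s = count ms2 s"
    proof (cases "1 \<le> fst s \<and> fst s \<le> snd s \<and> snd s \<le> int n")
      case True
      define i where "i = nat (fst s)"
      define j where "j = nat (snd s)"
      have s: "s = (int i, int j)" using True by (auto simp: i_def j_def)
      have ij: "i \<in> {1..n}" "j \<in> {1..n}" "i \<le> j" using True by (auto simp: i_def j_def)
      have "Phi n ms1 i j = Phi n ms2 i j" using eq by simp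
      thus ?thesis using ij s by (simp add: Phi_def)
    next
      case False
      thus ?thesis using Mseg_count_out[OF m1] Mseg_count_out[OF m2] by simp
    qed
  qed
qed

lemma Phi_surj:
  assumes m: "m \<in> Mprime n d"
  shows "\<exists>ms\<in>Mseg n d. Phi n ms = m"
proof -
  define f where "f s = (if 1 \<le> fst s \<and> fst s \<le> snd s \<and> snd s \<le> int n then m (nat (fst s)) (nat (snd s)) else 0)" for s :: "int \<times> int"
  have fin: "finite {s. 0 < f s}"
  proof (rule finite_subset)
    show "{s. 0 < f s} \<subseteq> {1..int n} \<times> {1..int n}" by (auto simp: f_def split: if_splits)
  qed auto
  define ms where "ms = Abs_multiset f"
  have cnt: "count ms s = f s" for s using fin by (simp add: ms_def count_Abs_multiset)
  have sub: "set_mset ms \<subseteq> IP n"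
  proof
    fix s assume "s \<in># ms"
    hence "f s > 0" using cnt by (metis count_greater_zero_iff)
    hence h: "1 \<le> fst s \<and> fst s \<le> snd s \<and> snd s \<le> int n" by (auto simp: f_def split: if_splits)
    hence "s = (\<lambda>(i,j). (int i, int j)) (nat (fst s), nat (snd s))" by auto
    moreover have "(nat (fst s), nat (snd s)) \<in> {1..n} \<times> {1..n}" using h by auto
    ultimately show "s \<in> IP n" unfolding IP_def by blast
  qed
  have sz: "size (filter_mset Q ms) = (\<Sum>i=1..n. \<Sum>j=1..n. if Q (int i, int j) \<and> i \<le> j then m i j else 0)" for Q
    unfolding size_filter_dsum[OF sub] cnt f_def by (intro sum.cong refl) auto
  have mm: "m \<in> Mmat n d" using m by (simp add: Mprime_def)
  have inMseg: "ms \<in> Mseg n d"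
    unfolding Mseg_def
  proof (intro CollectI conjI allI ballI)
    fix s assume "s \<in># ms"
    hence "f s > 0" using cnt by (metis count_greater_zero_iff)
    thus "fst s \<le> snd s" by (auto simp: f_def split: if_splits)
  next
    fix k :: int
    have e: "size (filter_mset (\<lambda>(a,b). a \<le> k \<and> k \<le> b) ms) =
      (\<Sum>i=1..n. \<Sum>j=1..n. if int i \<le> k \<and> k \<le> int j then m i j else 0)"
      unfolding sz by (intro sum.cong refl) auto
    show "size (filter_mset (\<lambda>(a,b). a \<le> k \<and> k \<le> b) ms) = (if 1 \<le> k \<and> k \<le> int n then d (nat k) else 0)"
    proof (cases "1 \<le> k \<and> k \<le> int n")
      case True
      define k' where "k' = nat k"
      have kk: "k = int k'" "1 \<le> k'" "k' \<le> n" using True by (auto simp: k'_def)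
      have "(\<Sum>i=1..n. \<Sum>j=1..n. if int i \<le> k \<and> k \<le> int j then m i j else 0)
          = (\<Sum>i=1..n. \<Sum>j=1..n. if i \<le> k' \<and> k' \<le> j then m i j else 0)"
        unfolding kk by simp
      also have "\<dots> = psum n m k' k'" unfolding psum_def using rect_sum[of k' n k' m] kk by simp
      also have "\<dots> = d k'" using part2[OF m, of k' k'] kk by simp
      finally show ?thesis using e True kk by simp
    next
      case False
      have z: "(\<Sum>i=1..n. \<Sum>j=1..n. if int i \<le> k \<and> k \<le> int j then m i j else 0) = 0"
        using False by (intro sum.neutral ballI) auto
      show ?thesis unfolding e z using False by auto
    qed
  qed
  have "Phi n ms = m"
  proof (intro ext)
    fix i j
    show "Phi n ms i j = m i j"
    proof (cases "i \<in> {1..n} \<and> j \<in> {1..n}")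
      case False
      thus ?thesis using Mmat_out[OF mm] by (auto simp: Phi_def)
    next
      case True
      show ?thesis
      proof (cases "i \<le> j")
        case True
        thus ?thesis using \<open>i \<in> {1..n} \<and> j \<in> {1..n}\<close> by (simp add: Phi_def cnt f_def)
      next
        case False
        show ?thesis
        proof (cases "j + 1 = i")
          case True
          have "size (filter_mset (\<lambda>(k,l). k \<le> int j \<and> int i \<le> l) ms) =
             (\<Sum>i'=1..n. \<Sum>j'=1..n. if i' \<le> j \<and> i \<le> j' then m i' j' else 0)"
            unfolding sz using True by (intro sum.cong refl) auto
          also have "\<dots> = psum n m j i" unfolding psum_def
            using rect_sum[of j n i m] \<open>i \<in> {1..n} \<and> j \<in> {1..n}\<close> by simp
          also have "\<dots> = m i j"
          proof -
            have "j = i - 1" using True by simp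
            thus ?thesis using part4[OF m, of i] True \<open>i \<in> {1..n} \<and> j \<in> {1..n}\<close> by simp
          qed
          finally show ?thesis using True \<open>i \<in> {1..n} \<and> j \<in> {1..n}\<close> by (simp add: Phi_def)
        next
          case False
          thus ?thesis using \<open>\<not> i \<le> j\<close> \<open>i \<in> {1..n} \<and> j \<in> {1..n}\<close> Mprime_zero[OF m, of j i]
            by (simp add: Phi_def)
        qed
      qed
    qed
  qed
  thus ?thesis using inMseg by blast
qed

lemma part5: "bij_betw (Phi n) (Mseg n d) (Mprime n d)"
  unfolding bij_betw_def
  using Phi_inj Phi_in Phi_surj by blast


definition Inv :: "nat \<Rightarrow> (nat \<Rightarrow> nat) \<Rightarrow> (nat \<times> nat) set" where
  "Inv D w = {(x,y). x \<in> {1..D} \<and> y \<in> {1..D} \<and> x < y \<and> w y < w x}"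

definition ninv :: "nat \<Rightarrow> (nat \<Rightarrow> nat) \<Rightarrow> nat" where
  "ninv D w = card (Inv D w)"

lemma finite_Inv[simp]: "finite (Inv D w)"
  by (rule finite_subset[of _ "{1..D} \<times> {1..D}"]) (auto simp: Inv_def)

lemma perm_in: "w permutes {1..D} \<Longrightarrow> x \<in> {1..D} \<Longrightarrow> w x \<in> {1..D}"
  using permutes_in_image[of w "{1..D}" x] by blast

lemma perm_inj: "w permutes S \<Longrightarrow> w x = w y \<Longrightarrow> x = y"
  by (metis permutes_inverses(2))

lemma ninv_swap_less:
  assumes u: "u permutes {1..D}" and ab: "1 \<le> a" "a < b" "b \<le> D" and lt: "u a < u b"
  shows "ninv D u < ninv D (u \<circ> transpose a b)"
proof -
  define \<tau> where "\<tau> = transpose a b"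
  define v where "v = u \<circ> \<tau>"
  define G where "G p = (if (a < fst p \<and> fst p < b) \<or> (a < snd p \<and> snd p < b) then p
                         else (\<tau> (fst p), \<tau> (snd p)))" for p
  have \<tau>i: "\<tau> (\<tau> z) = z" for z by (simp add: \<tau>_def)
  have \<tau>int: "a < z \<and> z < b \<Longrightarrow> \<tau> z = z" for z by (auto simp: \<tau>_def transpose_def)
  have Gi: "G (G p) = p" for p
  proof (cases "(a < fst p \<and> fst p < b) \<or> (a < snd p \<and> snd p < b)")
    case True thus ?thesis by (simp add: G_def)
  next
    case False
    have "\<not> ((a < \<tau> (fst p) \<and> \<tau> (fst p) < b) \<or> (a < \<tau> (snd p) \<and> \<tau> (snd p) < b))"
      using False ab by (auto simp: \<tau>_def transpose_def)
    hence q: "G (\<tau> (fst p), \<tau> (snd p)) = (\<tau> (\<tau> (fst p)), \<tau> (\<tau> (snd p)))"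
      unfolding G_def by (simp only: fst_conv snd_conv if_False)
    have "G p = (\<tau> (fst p), \<tau> (snd p))" using False unfolding G_def by (simp only: if_False)
    thus ?thesis using q by (simp add: \<tau>i)
  qed
  have injG: "inj_on G (Inv D u)" by (metis Gi inj_onI)
  have uinj: "u x = u y \<Longrightarrow> x = y" for x y using perm_inj[OF u] .
  have into: "G p \<in> Inv D v" if p: "p \<in> Inv D u" for p
  proof -
    obtain x y where xy: "p = (x,y)" by force
    have h: "x \<in> {1..D}" "y \<in> {1..D}" "x < y" "u y < u x" using p xy by (auto simp: Inv_def)
    show ?thesis
    proof (cases "(a < x \<and> x < b) \<or> (a < y \<and> y < b)")
      case True
      hence Gp: "G p = (x,y)" by (simp add: G_def xy)
      have "v y < v x"
      proof -
        have vx: "v x = (if x = a then u b else if x = b then u a else u x)"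
          by (simp add: v_def \<tau>_def transpose_def)
        have vy: "v y = (if y = a then u b else if y = b then u a else u y)"
          by (simp add: v_def \<tau>_def transpose_def)
        show ?thesis using True h lt ab unfolding vx vy by auto
      qed
      thus ?thesis using Gp h by (simp add: Inv_def)
    next
      case False
      hence Gp: "G p = (\<tau> x, \<tau> y)" unfolding G_def xy by (simp only: fst_conv snd_conv if_False)
      have nab: "\<not> (x = a \<and> y = b)" using h lt by auto
      have o: "\<tau> x < \<tau> y" using False h nab ab by (auto simp: \<tau>_def transpose_def)
      have r: "\<tau> x \<in> {1..D}" "\<tau> y \<in> {1..D}" using h ab by (auto simp: \<tau>_def transpose_def)
      have "v (\<tau> y) < v (\<tau> x)" using h by (simp add: v_def \<tau>i)
      thus ?thesis using Gp o r by (simp add: Inv_def)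
    qed
  qed
  have notin: "(a,b) \<notin> G ` Inv D u"
  proof
    assume "(a,b) \<in> G ` Inv D u"
    then obtain p where p: "p \<in> Inv D u" "(a,b) = G p" by (rule imageE) (rule that)
    hence "p = G (a,b)" using Gi[of p] by simp
    also have "G (a,b) = (b,a)" using ab by (simp add: G_def \<tau>_def)
    finally show False using p(1) ab by (auto simp: Inv_def)
  qed
  have abin: "(a,b) \<in> Inv D v" using ab lt by (simp add: Inv_def v_def \<tau>_def)
  have "G ` Inv D u \<subset> Inv D v" using into notin abin by blast
  hence "card (G ` Inv D u) < card (Inv D v)" by (simp add: psubset_card_mono)
  thus ?thesis using card_image[OF injG] by (simp add: ninv_def v_def \<tau>_def)
qed

lemma strict_mono_self:
  fixes f :: "nat \<Rightarrow> nat" and D :: nat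
  assumes mono: "\<And>x y. x \<in> {1..D} \<Longrightarrow> y \<in> {1..D} \<Longrightarrow> x < y \<Longrightarrow> f x < f y"
    and rng: "\<And>x. x \<in> {1..D} \<Longrightarrow> f x \<in> {1..D}"
    and x: "x \<in> {1..D}"
  shows "f x = x"
proof -
  have lo: "1 \<le> x \<longrightarrow> x \<le> D \<longrightarrow> x \<le> f x" for x
  proof (induction x)
    case 0 thus ?case by simp
  next
    case (Suc x)
    show ?case
    proof (cases "x = 0")
      case True thus ?thesis using rng[of 1] by auto
    next
      case False
      thus ?thesis using Suc mono[of x "Suc x"] by auto
    qed
  qed
  have hi: "\<forall>x. D - x = k \<longrightarrow> 1 \<le> x \<longrightarrow> x \<le> D \<longrightarrow> f x \<le> x" for k
  proof (induction k)
    case 0 thus ?case using rng by fastforce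
  next
    case (Suc k)
    show ?case
    proof (intro allI impI)
      fix x assume h: "D - x = Suc k" "1 \<le> x" "x \<le> D"
      hence "f (Suc x) \<le> Suc x" using Suc[rule_format, of "Suc x"] by auto
      moreover have "f x < f (Suc x)" using mono[of x "Suc x"] h by auto
      ultimately show "f x \<le> x" by simp
    qed
  qed
  show ?thesis using lo[of x] hi[of "D - x"] x by fastforce
qed

lemma ninv0_id:
  assumes w: "w permutes {1..D}" and z: "ninv D w = 0"
  shows "w = id"
proof -
  have e: "Inv D w = {}" using z by (simp add: ninv_def)
  have mono: "w x < w y" if "x \<in> {1..D}" "y \<in> {1..D}" "x < y" for x y
  proof -
    have "\<not> w y < w x" using e that by (auto simp: Inv_def)
    moreover have "w x \<noteq> w y" using perm_inj[OF w] that by force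
    ultimately show ?thesis by simp
  qed
  show ?thesis
  proof
    fix x show "w x = id x"
    proof (cases "x \<in> {1..D}")
      case True thus ?thesis using strict_mono_self[OF mono perm_in[OF w]] by simp
    next
      case False thus ?thesis using w by (simp add: permutes_not_in)
    qed
  qed
qed

lemma transpose_order:
  assumes "u \<noteq> v" "\<not> ({u,v} = {i, Suc i})"
  shows "(transpose i (Suc i) v < transpose i (Suc i) u) = (v < u)"
  using assms by (auto simp: transpose_def doubleton_eq_iff)

lemma adj_Inv:
  assumes f: "f permutes {1..D}" and i: "1 \<le> i" "i < D"
  defines "g \<equiv> transpose i (Suc i) \<circ> f"
  defines "a \<equiv> inv f i" and "b \<equiv> inv f (Suc i)"
  shows "Inv D g - {(min a b, max a b)} = Inv D f - {(min a b, max a b)}"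
    and "g permutes {1..D}"
    and "a \<in> {1..D}" "b \<in> {1..D}" "f a = i" "f b = Suc i"
proof -
  show fa: "f a = i" "f b = Suc i" unfolding a_def b_def using permutes_inverses(1)[OF f] by auto
  show ab: "a \<in> {1..D}" "b \<in> {1..D}" unfolding a_def b_def using i permutes_in_image[OF permutes_inv[OF f]] by auto
  show "g permutes {1..D}" unfolding g_def using i f by (intro permutes_compose permutes_swap_id) auto
  have key: "(g y < g x) = (f y < f x)" if "x < y" "(x,y) \<noteq> (min a b, max a b)" for x y
  proof -
    have "f x \<noteq> f y" using that perm_inj[OF f] by force
    moreover have "\<not> ({f x, f y} = {i, Suc i})"
    proof
      assume "{f x, f y} = {i, Suc i}"
      hence "(f x = i \<and> f y = Suc i) \<or> (f x = Suc i \<and> f y = i)" by (auto simp: doubleton_eq_iff)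
      hence "(x = a \<and> y = b) \<or> (x = b \<and> y = a)" using fa perm_inj[OF f] by metis
      thus False using that by auto
    qed
    ultimately show ?thesis unfolding g_def using transpose_order by simp
  qed
  show "Inv D g - {(min a b, max a b)} = Inv D f - {(min a b, max a b)}"
    using key by (auto simp: Inv_def)
qed

lemma ninv_adj_le:
  assumes f: "f permutes {1..D}" and i: "1 \<le> i" "i < D"
  shows "ninv D (transpose i (Suc i) \<circ> f) \<le> Suc (ninv D f)"
proof -
  let ?p = "(min (inv f i) (inv f (Suc i)), max (inv f i) (inv f (Suc i)))"
  have "Inv D (transpose i (Suc i) \<circ> f) \<subseteq> insert ?p (Inv D f)"
    using adj_Inv(1)[OF f i] by blast
  hence "card (Inv D (transpose i (Suc i) \<circ> f)) \<le> card (insert ?p (Inv D f))"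
    by (intro card_mono) auto
  also have "\<dots> \<le> Suc (card (Inv D f))" by (simp add: card_insert_if)
  finally show ?thesis by (simp add: ninv_def)
qed

lemma ninv_adj_desc:
  assumes f: "f permutes {1..D}" and i: "1 \<le> i" "i < D" and desc: "inv f (Suc i) < inv f i"
  shows "Suc (ninv D (transpose i (Suc i) \<circ> f)) = ninv D f"
proof -
  define a where "a = inv f i"
  define b where "b = inv f (Suc i)"
  define g where "g = transpose i (Suc i) \<circ> f"
  have ba: "b < a" using desc by (simp add: a_def b_def)
  note A = adj_Inv[OF f i, folded a_def b_def g_def]
  have p: "(min a b, max a b) = (b, a)" using ba by simp
  have inf: "(b,a) \<in> Inv D f" using A(3-6) ba by (simp add: Inv_def)
  have ing: "(b,a) \<notin> Inv D g" using A(5,6) by (simp add: Inv_def g_def)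
  have "Inv D g = Inv D f - {(b,a)}" using A(1) ing unfolding p by blast
  hence "card (Inv D g) = card (Inv D f) - 1" using inf by simp
  moreover have "card (Inv D f) > 0" using inf card_gt_0_iff by fastforce
  ultimately show ?thesis by (simp add: ninv_def g_def)
qed

abbreviation word :: "nat list \<Rightarrow> nat \<Rightarrow> nat" where
  "word ts \<equiv> foldr (\<lambda>i f. transpose i (Suc i) \<circ> f) ts id"

lemma word_perm:
  "set ts \<subseteq> {1..<D} \<Longrightarrow> word ts permutes {1..D} \<and> ninv D (word ts) \<le> length ts"
proof (induction ts)
  case Nil
  have "Inv D id = {}" by (auto simp: Inv_def)
  thus ?case by (simp add: ninv_def id_def permutes_def)
next
  case (Cons i ts)
  have s: "set ts \<subseteq> {1..<D}" and i: "1 \<le> i" "i < D" using Cons.prems by auto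
  have ih: "word ts permutes {1..D}" "ninv D (word ts) \<le> length ts" using Cons.IH[OF s] by blast+
  have w: "word (i # ts) = transpose i (Suc i) \<circ> word ts" by (simp only: foldr.simps o_apply)
  have p: "transpose i (Suc i) \<circ> word ts permutes {1..D}"
    using ih i by (intro permutes_compose permutes_swap_id) auto
  have "ninv D (transpose i (Suc i) \<circ> word ts) \<le> Suc (ninv D (word ts))"
    using ninv_adj_le[OF ih(1) i] .
  hence n: "ninv D (transpose i (Suc i) \<circ> word ts) \<le> length (i # ts)" using ih(2) by simp
  show ?case unfolding w using p n by blast
qed

lemma chain_le:
  fixes g :: "nat \<Rightarrow> nat"
  assumes "\<forall>k. lo \<le> k \<and> k < hi \<longrightarrow> g k < g (Suc k)" "lo \<le> hi"
  shows "g lo \<le> g hi"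
  using assms
proof (induction hi)
  case 0 thus ?case by simp
next
  case (Suc hi)
  show ?case
  proof (cases "lo = Suc hi")
    case True thus ?thesis by simp
  next
    case False
    hence "g lo \<le> g hi" using Suc by auto
    moreover have "g hi < g (Suc hi)" using Suc False by auto
    ultimately show ?thesis by simp
  qed
qed

lemma word_exists:
  "w permutes {1..D} \<Longrightarrow> \<exists>ts. length ts = ninv D w \<and> set ts \<subseteq> {1..<D} \<and> w = word ts"
proof (induction "ninv D w" arbitrary: w rule: less_induct)
  case less
  note w = less.prems
  show ?case
  proof (cases "ninv D w = 0")
    case True
    hence "w = id" using ninv0_id[OF w] by simp
    thus ?thesis using True by (intro exI[of _ "[]"]) simp
  next
    case False
    hence "Inv D w \<noteq> {}" by (auto simp: ninv_def)
    then obtain x y where xy: "x \<in> {1..D}" "y \<in> {1..D}" "x < y" "w y < w x" by (auto simp: Inv_def)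
    let ?g = "inv w"
    have gy: "?g (w y) = y" and gx: "?g (w x) = x" using permutes_inverses(2)[OF w] by auto
    have "\<exists>k. w y \<le> k \<and> k < w x \<and> \<not> ?g k < ?g (Suc k)"
    proof (rule ccontr)
      assume "\<not> ?thesis"
      hence c: "\<forall>k. w y \<le> k \<and> k < w x \<longrightarrow> ?g k < ?g (Suc k)" by blast
      have "?g (w y) \<le> ?g (w x)" using chain_le[OF c] xy by simp
      thus False using gx gy xy by simp
    qed
    then obtain i where i: "w y \<le> i" "i < w x" "\<not> ?g i < ?g (Suc i)" by blast
    have i1: "1 \<le> i" "i < D" using i perm_in[OF w xy(1)] perm_in[OF w xy(2)] by auto
    have neq: "?g i \<noteq> ?g (Suc i)"
      using permutes_inverses(1)[OF w, of i] permutes_inverses(1)[OF w, of "Suc i"] by force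
    hence desc: "?g (Suc i) < ?g i" using i by simp
    define h where "h = transpose i (Suc i) \<circ> w"
    have hp: "h permutes {1..D}" unfolding h_def using w i1 by (intro permutes_compose permutes_swap_id) auto
    have hn: "Suc (ninv D h) = ninv D w" unfolding h_def using ninv_adj_desc[OF w i1 desc] .
    have lt: "ninv D h < ninv D w" using hn by simp
    obtain ts where ts: "length ts = ninv D h" "set ts \<subseteq> {1..<D}" "h = word ts"
      using less.hyps[OF lt hp] by blast
    have "w = transpose i (Suc i) \<circ> h" unfolding h_def by (simp add: comp_assoc[symmetric])
    hence "w = word (i # ts)" using ts by simp
    thus ?thesis using ts hn i1 by (intro exI[of _ "i # ts"]) auto
  qed
qed

lemma coxlen_eq:
  assumes w: "w permutes {1..D}"
  shows "coxlen D w = ninv D w"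
  unfolding coxlen_def
proof (rule Least_equality)
  show "\<exists>ts. length ts = ninv D w \<and> set ts \<subseteq> {1..<D} \<and> w = word ts"
    using word_exists[OF w] .
next
  fix k assume "\<exists>ts. length ts = k \<and> set ts \<subseteq> {1..<D} \<and> w = word ts"
  then obtain ts where "length ts = k" "set ts \<subseteq> {1..<D}" "w = word ts" by blast
  thus "ninv D w \<le> k" using word_perm[of ts D] by simp
qed


definition R :: "(nat \<Rightarrow> nat) \<Rightarrow> nat \<Rightarrow> nat \<Rightarrow> nat" where
  "R w x t = card {y \<in> {1..x}. t \<le> w y}"

lemma R_Suc: "R w (Suc x) t = R w x t + (if t \<le> w (Suc x) then 1 else 0)"
proof -
  have "{y \<in> {1..Suc x}. t \<le> w y} = {y \<in> {1..x}. t \<le> w y} \<union> (if t \<le> w (Suc x) then {Suc x} else {})"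
    by (auto simp: le_Suc_eq)
  thus ?thesis by (auto simp: R_def)
qed

lemma R_split:
  assumes "t1 \<le> t2"
  shows "R w x t1 = R w x t2 + card {y \<in> {1..x}. t1 \<le> w y \<and> w y < t2}"
proof -
  have "{y \<in> {1..x}. t1 \<le> w y} = {y \<in> {1..x}. t2 \<le> w y} \<union> {y \<in> {1..x}. t1 \<le> w y \<and> w y < t2}"
    using assms by auto
  moreover have "{y \<in> {1..x}. t2 \<le> w y} \<inter> {y \<in> {1..x}. t1 \<le> w y \<and> w y < t2} = {}" by auto
  ultimately show ?thesis unfolding R_def by (simp add: card_Un_disjoint)
qed

lemma R_cong: "(\<And>y. y \<in> {1..x} \<Longrightarrow> u y = v y) \<Longrightarrow> R u x t = R v x t"
  unfolding R_def by (intro arg_cong[where f=card]) auto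

lemma R_swap_lo:
  assumes "x < a" "a < b"
  shows "R (u \<circ> transpose a b) x t = R u x t"
  using assms by (intro R_cong) (auto simp: transpose_def)

lemma R_swap_hi:
  assumes "1 \<le> a" "a < b" "b \<le> x"
  shows "R (u \<circ> transpose a b) x t = R u x t"
proof -
  let ?\<tau> = "transpose a b"
  have "{y \<in> {1..x}. t \<le> u (?\<tau> y)} = ?\<tau> ` {y \<in> {1..x}. t \<le> u y}"
  proof
    show "{y \<in> {1..x}. t \<le> u (?\<tau> y)} \<subseteq> ?\<tau> ` {y \<in> {1..x}. t \<le> u y}"
    proof
      fix y assume y: "y \<in> {y \<in> {1..x}. t \<le> u (?\<tau> y)}"
      have "?\<tau> y \<in> {y \<in> {1..x}. t \<le> u y}" using y assms by (auto simp: transpose_def)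
      moreover have "y = ?\<tau> (?\<tau> y)" by simp
      ultimately show "y \<in> ?\<tau> ` {y \<in> {1..x}. t \<le> u y}" by blast
    qed
  next
    show "?\<tau> ` {y \<in> {1..x}. t \<le> u y} \<subseteq> {y \<in> {1..x}. t \<le> u (?\<tau> y)}"
      using assms by (auto simp: transpose_def)
  qed
  moreover have "inj_on ?\<tau> {y \<in> {1..x}. t \<le> u y}" by (meson inj_on_subset inj_transpose subset_UNIV)
  ultimately show ?thesis unfolding R_def by (simp add: card_image)
qed

lemma R_swap_mid:
  assumes "1 \<le> a" "a \<le> x" "x < b"
  shows "R (u \<circ> transpose a b) x t + (if t \<le> u a then 1 else 0) = R u x t + (if t \<le> u b then 1 else 0)"
proof -
  let ?S = "{y \<in> {1..x}. y \<noteq> a \<and> t \<le> u y}"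
  have e1: "{y \<in> {1..x}. t \<le> (u \<circ> transpose a b) y} = ?S \<union> (if t \<le> u b then {a} else {})"
    using assms by (auto simp: transpose_def)
  have e2: "{y \<in> {1..x}. t \<le> u y} = ?S \<union> (if t \<le> u a then {a} else {})"
    using assms by auto
  have fin: "finite ?S" by simp
  show ?thesis unfolding R_def e1 e2 using fin by (auto simp: card_insert_if)
qed

lemma R_swap_mono:
  assumes ab: "1 \<le> a" "a < b" and lt: "u a < u b"
  shows "R u x t \<le> R (u \<circ> transpose a b) x t"
proof (cases "x < a")
  case True thus ?thesis using R_swap_lo[OF True ab(2)] by simp
next
  case False
  show ?thesis
  proof (cases "b \<le> x")
    case True thus ?thesis using R_swap_hi[OF ab True] by simp
  next
    case False
    hence "a \<le> x" "x < b" using \<open>\<not> x < a\<close> by auto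
    from R_swap_mid[OF ab(1) this, of u t] lt show ?thesis by (auto split: if_splits)
  qed
qed

lemma bruhat_step_R:
  assumes st: "bruhat_step D u w"
  shows "w permutes {1..D} \<and> R u x t \<le> R w x t"
proof -
  from st obtain a b where u: "u permutes {1..D}" and ab: "a \<in> {1..D}" "b \<in> {1..D}" "a \<noteq> b"
    and w: "w = u \<circ> transpose a b" and cl: "coxlen D u < coxlen D w"
    unfolding bruhat_step_def by blast
  have wp: "w permutes {1..D}" unfolding w using u ab by (intro permutes_compose permutes_swap_id) auto
  have nl: "ninv D u < ninv D w" using cl coxlen_eq[OF u] coxlen_eq[OF wp] by simp
  define a' b' where "a' = min a b" and "b' = max a b"
  have tr: "transpose a b = transpose a' b'" unfolding a'_def b'_def
    by (cases "a \<le> b") (auto simp: transpose_commute min_def max_def)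
  have ab': "1 \<le> a'" "a' < b'" "b' \<le> D" using ab by (auto simp: a'_def b'_def)
  have w': "w = u \<circ> transpose a' b'" using w tr by simp
  have "u a' < u b'"
  proof (rule ccontr)
    assume "\<not> u a' < u b'"
    moreover have "u a' \<noteq> u b'" using perm_inj[OF u] ab' by force
    ultimately have "w a' < w b'" unfolding w' by simp
    hence "ninv D w < ninv D (w \<circ> transpose a' b')" using ninv_swap_less[OF wp ab'] by simp
    moreover have "w \<circ> transpose a' b' = u" unfolding w' by (simp add: comp_assoc)
    ultimately show False using nl by simp
  qed
  thus ?thesis using R_swap_mono[OF ab'(1,2)] wp w' by simp
qed

lemma bruhat_le_R:
  assumes "bruhat_le D u w" "u permutes {1..D}"
  shows "w permutes {1..D} \<and> (\<forall>x t. R u x t \<le> R w x t)"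
  using assms(1) unfolding bruhat_le_def
proof (induction rule: rtranclp_induct)
  case base thus ?case using assms(2) by simp
next
  case (step y z)
  thus ?case using bruhat_step_R[OF step(2)] le_trans by blast
qed

definition tab :: "nat \<Rightarrow> (nat \<Rightarrow> nat) \<Rightarrow> (nat \<Rightarrow> nat) \<Rightarrow> bool" where
  "tab D u v \<longleftrightarrow> (\<forall>x\<le>D. \<forall>t\<in>{1..D}. R u x t \<le> R v x t)"

lemma tab_step:
  assumes u: "u permutes {1..D}" and v: "v permutes {1..D}" and ne: "u \<noteq> v" and tb: "tab D u v"
  shows "\<exists>a b. 1 \<le> a \<and> a < b \<and> b \<le> D \<and> v b < v a \<and> tab D u (v \<circ> transpose a b)"
proof -
  have "\<exists>x. u x \<noteq> v x" using ne by auto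
  then obtain x0 where x0: "u x0 \<noteq> v x0" by blast
  have x0D: "x0 \<in> {1..D}" using x0 u v by (metis permutes_not_in)
  define a where "a = (LEAST x. u x \<noteq> v x)"
  have ua: "u a \<noteq> v a" unfolding a_def using x0 by (rule LeastI)
  have aD: "a \<in> {1..D}" using ua u v by (metis permutes_not_in)
  have below: "y < a \<Longrightarrow> u y = v y" for y unfolding a_def using not_less_Least by blast
  have uaD: "u a \<in> {1..D}" "v a \<in> {1..D}" using perm_in[OF u aD] perm_in[OF v aD] by auto
  have Rprev: "R u (a - 1) t = R v (a - 1) t" for t using below aD by (intro R_cong) auto
  have Ra: "R w a t = R w (a - 1) t + (if t \<le> w a then 1 else 0)" for w t
    using R_Suc[of w "a - 1" t] aD by simp
  have lt: "u a < v a"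
  proof (rule ccontr)
    assume "\<not> u a < v a"
    hence "v a < u a" using ua by simp
    hence "R v a (u a) < R u a (u a)" using Ra[of v "u a"] Ra[of u "u a"] Rprev[of "u a"] by simp
    moreover have "R u a (u a) \<le> R v a (u a)" using tb aD uaD unfolding tab_def by auto
    ultimately show False by simp
  qed
  define C where "C = {y. a < y \<and> y \<le> D \<and> u a \<le> v y \<and> v y < v a}"
  define y0 where "y0 = inv v (u a)"
  have vy0: "v y0 = u a" unfolding y0_def using permutes_inverses(1)[OF v] by simp
  have y0D: "y0 \<in> {1..D}" unfolding y0_def using uaD permutes_in_image[OF permutes_inv[OF v]] by auto
  have "y0 \<noteq> a" using vy0 ua by auto
  moreover have "\<not> y0 < a"
  proof
    assume "y0 < a" hence "u y0 = u a" using below vy0 by simp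
    hence "y0 = a" using perm_inj[OF u] by blast
    thus False using \<open>y0 < a\<close> by simp
  qed
  ultimately have "y0 \<in> C" unfolding C_def using y0D vy0 lt by auto
  define b where "b = (LEAST y. y \<in> C)"
  have bC: "b \<in> C" unfolding b_def using \<open>y0 \<in> C\<close> by (rule LeastI)
  have bmin: "a < y \<Longrightarrow> y < b \<Longrightarrow> \<not> (u a \<le> v y \<and> v y < v a)" for y
  proof
    assume h: "a < y" "y < b" "u a \<le> v y \<and> v y < v a"
    hence "y \<in> C" using bC unfolding C_def by auto
    hence "b \<le> y" unfolding b_def by (rule Least_le)
    thus False using h by simp
  qed
  have ab: "a < b" "b \<le> D" "u a \<le> v b" "v b < v a" using bC unfolding C_def by auto
  have a1: "1 \<le> a" using aD by simp
  have "tab D u (v \<circ> transpose a b)"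
    unfolding tab_def
  proof (intro allI impI ballI)
    fix x t assume xD: "x \<le> D" and tD: "t \<in> {1..D}"
    have base: "R u x t \<le> R v x t" using tb xD tD unfolding tab_def by auto
    show "R u x t \<le> R (v \<circ> transpose a b) x t"
    proof (cases "x < a")
      case True thus ?thesis using R_swap_lo[OF True ab(1)] base by simp
    next
      case False
      show ?thesis
      proof (cases "b \<le> x")
        case True thus ?thesis using R_swap_hi[OF a1 ab(1) True] base by simp
      next
        case False
        hence ax: "a \<le> x" "x < b" using \<open>\<not> x < a\<close> by auto
        have mid: "R (v \<circ> transpose a b) x t + (if t \<le> v a then 1 else 0) = R v x t + (if t \<le> v b then 1 else 0)"
          using R_swap_mid[OF a1 ax] .
        show ?thesis
        proof (cases "t \<le> v b \<or> v a < t")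
          case True thus ?thesis using mid base ab by auto
        next
          case False
          hence t: "v b < t" "t \<le> v a" by auto
          define K where "K = {y \<in> {1..a-1}. u a \<le> u y \<and> u y < t}"
          have A: "R v x (u a) = R v x t + card K"
          proof -
            have "{y \<in> {1..x}. u a \<le> v y \<and> v y < t} = K"
            proof
              show "{y \<in> {1..x}. u a \<le> v y \<and> v y < t} \<subseteq> K"
              proof
                fix y assume y: "y \<in> {y \<in> {1..x}. u a \<le> v y \<and> v y < t}"
                have "y \<noteq> a" using y t by auto
                moreover have "\<not> (a < y)" using bmin[of y] y ax t by auto
                ultimately have "y < a" by simp
                thus "y \<in> K" using y below[of y] unfolding K_def by auto
              qed
            next
              show "K \<subseteq> {y \<in> {1..x}. u a \<le> v y \<and> v y < t}"
                unfolding K_def using below ax by auto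
            qed
            thus ?thesis using R_split[of "u a" t v x] ab t by simp
          qed
          have B: "R u x (u a) \<ge> R u x t + card K + 1"
          proof -
            have sub: "insert a K \<subseteq> {y \<in> {1..x}. u a \<le> u y \<and> u y < t}"
              unfolding K_def using ax a1 ab t by auto
            have "a \<notin> K" unfolding K_def by auto
            hence "card (insert a K) = card K + 1" unfolding K_def by simp
            moreover have "card (insert a K) \<le> card {y \<in> {1..x}. u a \<le> u y \<and> u y < t}"
              by (rule card_mono[OF _ sub]) simp
            ultimately show ?thesis using R_split[of "u a" t u x] ab t by simp
          qed
          have "R u x (u a) \<le> R v x (u a)" using tb xD uaD unfolding tab_def by auto
          hence "R u x t + 1 \<le> R v x t" using A B by simp
          thus ?thesis using mid t ab by simp
        qed
      qed
    qed
  qed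
  thus ?thesis using a1 ab by blast
qed

lemma tab_bruhat:
  assumes u: "u permutes {1..D}"
  shows "v permutes {1..D} \<Longrightarrow> tab D u v \<Longrightarrow> bruhat_le D u v"
proof (induction "ninv D v" arbitrary: v rule: less_induct)
  case less
  note v = less.prems(1) and tb = less.prems(2)
  show ?case
  proof (cases "u = v")
    case True thus ?thesis by (simp add: bruhat_le_def)
  next
    case False
    obtain a b where ab: "1 \<le> a" "a < b" "b \<le> D" "v b < v a" and tb': "tab D u (v \<circ> transpose a b)"
      using tab_step[OF u v False tb] by blast
    define v' where "v' = v \<circ> transpose a b"
    have v'p: "v' permutes {1..D}" unfolding v'_def using v ab by (intro permutes_compose permutes_swap_id) auto
    have vv: "v = v' \<circ> transpose a b" unfolding v'_def by (simp add: comp_assoc)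
    have "v' a < v' b" unfolding v'_def using ab by simp
    hence nl: "ninv D v' < ninv D v" using ninv_swap_less[OF v'p ab(1-3)] vv by simp
    have "bruhat_le D u v'" using less.hyps[OF nl v'p] tb' by (simp add: v'_def)
    moreover have "bruhat_step D v' v"
      unfolding bruhat_step_def using v'p ab vv nl coxlen_eq[OF v'p] coxlen_eq[OF v]
      by (intro conjI bexI[of _ a] bexI[of _ b]) auto
    ultimately show ?thesis unfolding bruhat_le_def by (metis rtranclp.rtrancl_into_rtrancl)
  qed
qed


definition ps :: "(nat \<Rightarrow> nat) \<Rightarrow> nat \<Rightarrow> nat" where
  "ps d k = (\<Sum>k'=1..k. d k')"

lemma ps_0[simp]: "ps d 0 = 0" by (simp add: ps_def)
lemma ps_Suc: "ps d (Suc k) = ps d k + d (Suc k)" by (simp add: ps_def)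
lemma ps_mono: "k \<le> k' \<Longrightarrow> ps d k \<le> ps d k'"
  unfolding ps_def by (rule sum_mono2) auto
lemma dtot_ps: "dtot n d = ps d n" by (simp add: dtot_def ps_def)

lemma finite_block[simp]: "finite (block d i)" by (simp add: block_def)

lemma block_eq: "1 \<le> i \<Longrightarrow> block d i = {ps d (i-1) + 1 .. ps d i}"
proof -
  assume i: "1 \<le> i"
  have "(\<Sum>k=1..<i. d k) = ps d (i - 1)" unfolding ps_def using i by (intro sum.cong) auto
  thus ?thesis by (simp add: block_def ps_def)
qed

lemma block_Suc: "block d (Suc k) = {ps d k + 1 .. ps d (Suc k)}"
  using block_eq[of "Suc k" d] by simp

lemma card_block: "1 \<le> i \<Longrightarrow> card (block d i) = d i"
proof -
  assume "1 \<le> i"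
  then obtain k where k: "i = Suc k" by (cases i) auto
  show ?thesis unfolding k block_Suc ps_Suc by simp
qed

lemma upto_split: "{1..ps d (Suc k)} = {1..ps d k} \<union> block d (Suc k)"
  "{1..ps d k} \<inter> block d (Suc k) = {}"
  unfolding block_Suc ps_Suc by auto

lemma block_disj: "1 \<le> i \<Longrightarrow> 1 \<le> j \<Longrightarrow> i \<noteq> j \<Longrightarrow> block d i \<inter> block d j = {}"
proof -
  have lt: "block d i \<inter> block d j = {}" if "1 \<le> i" "i < j" for i j
  proof -
    have "ps d i \<le> ps d (j - 1)" using that by (intro ps_mono) auto
    thus ?thesis using that by (auto simp: block_eq)
  qed
  assume "1 \<le> i" "1 \<le> j" "i \<noteq> j"
  thus ?thesis using lt[of i j] lt[of j i] by (cases "i < j") auto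
qed

lemma block_sub: "1 \<le> i \<Longrightarrow> i \<le> n \<Longrightarrow> block d i \<subseteq> {1..ps d n}"
proof -
  assume "1 \<le> i" "i \<le> n"
  hence "ps d i \<le> ps d n" by (intro ps_mono)
  thus ?thesis using \<open>1 \<le> i\<close> by (auto simp: block_eq)
qed

lemma R_blocks: "R w (ps d k) t = (\<Sum>i=1..k. card {y \<in> block d i. t \<le> w y})"
proof (induction k)
  case 0 thus ?case by (simp add: R_def)
next
  case (Suc k)
  have "{y \<in> {1..ps d (Suc k)}. t \<le> w y} = {y \<in> {1..ps d k}. t \<le> w y} \<union> {y \<in> block d (Suc k). t \<le> w y}"
    using upto_split(1)[of d k] by auto
  moreover have "{y \<in> {1..ps d k}. t \<le> w y} \<inter> {y \<in> block d (Suc k). t \<le> w y} = {}"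
    using upto_split(2)[of d k] by auto
  ultimately have "R w (ps d (Suc k)) t = R w (ps d k) t + card {y \<in> block d (Suc k). t \<le> w y}"
    unfolding R_def by (simp add: card_Un_disjoint block_def)
  thus ?case using Suc by simp
qed

lemma thr_blocks:
  assumes rng: "\<forall>y\<in>B. w y \<in> {1..ps d n}" and fin: "finite B"
  shows "j0 \<le> n \<Longrightarrow> card {y\<in>B. ps d j0 < w y} = (\<Sum>j'=Suc j0..n. card {y\<in>B. w y \<in> block d j'})"
proof (induction "n - j0" arbitrary: j0)
  case 0
  hence "j0 = n" by simp
  hence e: "{y\<in>B. ps d j0 < w y} = {}" using rng by auto
  show ?case unfolding e using \<open>j0 = n\<close> by simp
next
  case (Suc k)
  hence j: "Suc j0 \<le> n" "k = n - Suc j0" by auto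
  have ih: "card {y\<in>B. ps d (Suc j0) < w y} = (\<Sum>j'=Suc (Suc j0)..n. card {y\<in>B. w y \<in> block d j'})"
    using Suc.hyps(1)[OF j(2)] j by simp
  have "{y\<in>B. ps d j0 < w y} = {y\<in>B. ps d (Suc j0) < w y} \<union> {y\<in>B. w y \<in> block d (Suc j0)}"
    unfolding block_Suc by (auto simp: ps_Suc)
  moreover have "{y\<in>B. ps d (Suc j0) < w y} \<inter> {y\<in>B. w y \<in> block d (Suc j0)} = {}"
    unfolding block_Suc by auto
  ultimately have "card {y\<in>B. ps d j0 < w y} = card {y\<in>B. ps d (Suc j0) < w y} + card {y\<in>B. w y \<in> block d (Suc j0)}"
    using fin by (simp add: card_Un_disjoint)
  also have "\<dots> = (\<Sum>j'=Suc j0..n. card {y\<in>B. w y \<in> block d j'})"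
    using ih j by (simp add: sum.atLeast_Suc_atMost)
  finally show ?case .
qed

lemma psi_card:
  assumes w: "w permutes {1..dtot n d}" and ij: "i \<in> {1..n}" "j \<in> {1..n}"
  shows "psi n d w i j = card {y \<in> block d i. w y \<in> block d j}"
proof -
  have "w ` {y \<in> block d i. w y \<in> block d j} = w ` block d i \<inter> block d j" by auto
  moreover have "inj_on w {y \<in> block d i. w y \<in> block d j}"
    using permutes_inj[OF w] by (auto simp: inj_on_def inj_def)
  ultimately show ?thesis using ij by (simp add: psi_def card_image[symmetric])
qed

lemma boundary:
  assumes w: "w permutes {1..dtot n d}" and k: "k \<le> n" and j: "j \<in> {1..n}"
  shows "R w (ps d k) (Suc (ps d (j - 1))) = psum n (psi n d w) k j"
proof -
  have "R w (ps d k) (Suc (ps d (j - 1))) = (\<Sum>i=1..k. card {y \<in> block d i. ps d (j-1) < w y})"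
    unfolding R_blocks by (simp add: Suc_le_eq)
  also have "\<dots> = (\<Sum>i=1..k. \<Sum>j'=j..n. card {y \<in> block d i. w y \<in> block d j'})"
  proof (intro sum.cong refl)
    fix i assume i: "i \<in> {1..k}"
    have rng: "\<forall>y\<in>block d i. w y \<in> {1..ps d n}"
      using block_sub[of i n d] i k perm_in[OF w] by (auto simp: dtot_ps)
    have "card {y \<in> block d i. ps d (j-1) < w y} = (\<Sum>j'=Suc (j-1)..n. card {y \<in> block d i. w y \<in> block d j'})"
      using thr_blocks[OF rng finite_block, of "j-1"] j by auto
    thus "card {y \<in> block d i. ps d (j-1) < w y} = (\<Sum>j'=j..n. card {y \<in> block d i. w y \<in> block d j'})"
      using j by simp
  qed
  also have "\<dots> = psum n (psi n d w) k j"
    unfolding psum_def using k j by (intro sum.cong refl) (auto simp: psi_card[OF w])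
  finally show ?thesis .
qed


lemma glue_bij:
  assumes card: "\<And>i. i \<in> I \<Longrightarrow> card (P i) = card (Q i)"
    and finP: "\<And>i. i \<in> I \<Longrightarrow> finite (P i)" and finQ: "\<And>i. i \<in> I \<Longrightarrow> finite (Q i)"
    and dP: "disjoint_family_on P I" and dQ: "disjoint_family_on Q I"
  shows "\<exists>h. bij_betw h (\<Union>i\<in>I. P i) (\<Union>i\<in>I. Q i) \<and> (\<forall>i\<in>I. bij_betw h (P i) (Q i))"
proof -
  define H where "H i = (SOME h. bij_betw h (P i) (Q i))" for i
  have H: "bij_betw (H i) (P i) (Q i)" if "i \<in> I" for i
  proof -
    have "\<exists>h. bij_betw h (P i) (Q i)" using finite_same_card_bij[OF finP[OF that] finQ[OF that] card[OF that]] .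
    thus ?thesis unfolding H_def by (rule someI_ex)
  qed
  define h where "h x = H (SOME i. i \<in> I \<and> x \<in> P i) x" for x
  have hb: "bij_betw h (P i) (Q i)" if i: "i \<in> I" for i
  proof -
    have hx: "h x = H i x" if x: "x \<in> P i" for x
    proof -
      have "(SOME i. i \<in> I \<and> x \<in> P i) = i"
      proof (rule some_equality)
        show "i \<in> I \<and> x \<in> P i" using i x by simp
      next
        fix j assume "j \<in> I \<and> x \<in> P j"
        thus "j = i" using dP i x unfolding disjoint_family_on_def by blast
      qed
      thus ?thesis by (simp add: h_def)
    qed
    have "bij_betw h (P i) (Q i) = bij_betw (H i) (P i) (Q i)" by (rule bij_betw_cong) (rule hx)
    thus ?thesis using H[OF i] by simp
  qed
  have "bij_betw h (\<Union>i\<in>I. P i) (\<Union>i\<in>I. Q i)" by (rule bij_betw_UNION_disjoint[OF dQ hb])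
  thus ?thesis using hb by blast
qed

lemma UN_blocks: "(\<Union>i\<in>{1..k}. block d i) = {1..ps d k}"
proof (induction k)
  case 0 thus ?case by simp
next
  case (Suc k)
  have "{1..Suc k} = insert (Suc k) {1..k}" by auto
  hence "(\<Union>i\<in>{1..Suc k}. block d i) = block d (Suc k) \<union> (\<Union>i\<in>{1..k}. block d i)" by simp
  thus ?case using Suc upto_split(1)[of d k] by auto
qed

lemma disj_blocks: "disjoint_family_on (block d) {1..n}"
  unfolding disjoint_family_on_def using block_disj by auto

lemma dcoset_exists:
  assumes m: "m \<in> Mmat n d"
  shows "\<exists>w. w permutes {1..dtot n d} \<and> psi n d w = m"
proof -
  define D where "D = dtot n d"
  define T where "T = {(i,j,k). i \<in> {1..n} \<and> j \<in> {1..n} \<and> k < m i j}"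
  define P where "P i = {p\<in>T. fst p = i}" for i
  define Q where "Q j = {p\<in>T. fst (snd p) = j}" for j
  have Peq: "P i = (\<lambda>(j,k). (i,j,k)) ` (SIGMA j:{1..n}. {..<m i j})" if "i \<in> {1..n}" for i
    unfolding P_def T_def using that by auto
  have Qeq: "Q j = (\<lambda>(i,k). (i,j,k)) ` (SIGMA i:{1..n}. {..<m i j})" if "j \<in> {1..n}" for j
    unfolding Q_def T_def using that by (auto simp: image_iff Bex_def)
  have cP: "card (P i) = d i" if i: "i \<in> {1..n}" for i
  proof -
    have "inj_on (\<lambda>(j,k). (i,j,k)) (SIGMA j:{1..n}. {..<m i j})" by (auto simp: inj_on_def)
    hence "card (P i) = card (SIGMA j:{1..n}. {..<m i j})" unfolding Peq[OF i] by (rule card_image)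
    also have "\<dots> = (\<Sum>j=1..n. m i j)" by (simp add: card_SigmaI)
    also have "\<dots> = d i" using Mmat_row[OF m i] .
    finally show ?thesis .
  qed
  have cQ: "card (Q j) = d j" if j: "j \<in> {1..n}" for j
  proof -
    have "inj_on (\<lambda>(i,k). (i,j,k)) (SIGMA i:{1..n}. {..<m i j})" by (auto simp: inj_on_def)
    hence "card (Q j) = card (SIGMA i:{1..n}. {..<m i j})" unfolding Qeq[OF j] by (rule card_image)
    also have "\<dots> = (\<Sum>i=1..n. m i j)" by (simp add: card_SigmaI)
    also have "\<dots> = d j" using Mmat_col[OF m j] .
    finally show ?thesis .
  qed
  have finT: "finite T"
  proof (rule finite_subset)
    show "T \<subseteq> {1..n} \<times> {1..n} \<times> {..<Max ((\<lambda>(i,j). m i j) ` ({1..n}\<times>{1..n})) + 1}"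
    proof
      fix p assume p: "p \<in> T"
      then obtain i j k where ijk: "p = (i,j,k)" "i \<in> {1..n}" "j \<in> {1..n}" "k < m i j" unfolding T_def by auto
      have "m i j \<le> Max ((\<lambda>(i,j). m i j) ` ({1..n}\<times>{1..n}))" using ijk by (intro Max_ge) auto
      thus "p \<in> {1..n} \<times> {1..n} \<times> {..<Max ((\<lambda>(i,j). m i j) ` ({1..n}\<times>{1..n})) + 1}" using ijk by auto
    qed
  qed simp
  have UP: "(\<Union>i\<in>{1..n}. P i) = T" unfolding P_def T_def by auto
  have UQ: "(\<Union>j\<in>{1..n}. Q j) = T" unfolding Q_def T_def by auto
  have dP: "disjoint_family_on P {1..n}" unfolding disjoint_family_on_def P_def by auto
  have dQ: "disjoint_family_on Q {1..n}" unfolding disjoint_family_on_def Q_def by auto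
  have UB: "(\<Union>i\<in>{1..n}. block d i) = {1..D}" unfolding D_def dtot_ps by (rule UN_blocks)
  obtain f where f: "bij_betw f T {1..D}" "\<forall>i\<in>{1..n}. bij_betw f (P i) (block d i)"
    using glue_bij[of "{1..n}" P "block d", OF _ _ _ dP disj_blocks] cP card_block finT
      UP UB unfolding P_def by (auto intro: finite_subset)
  obtain g where g: "bij_betw g T {1..D}" "\<forall>j\<in>{1..n}. bij_betw g (Q j) (block d j)"
    using glue_bij[of "{1..n}" Q "block d", OF _ _ _ dQ disj_blocks] cQ card_block finT
      UQ UB unfolding Q_def by (auto intro: finite_subset)
  define w where "w y = (if y \<in> {1..D} then g (inv_into T f y) else y)" for y
  have bw0: "bij_betw (g \<circ> inv_into T f) {1..D} {1..D}"
    using bij_betw_trans[OF bij_betw_inv_into[OF f(1)] g(1)] .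
  have bw: "bij_betw w {1..D} {1..D}"
  proof -
    have "bij_betw w {1..D} {1..D} = bij_betw (g \<circ> inv_into T f) {1..D} {1..D}"
      by (rule bij_betw_cong) (simp add: w_def)
    thus ?thesis using bw0 by simp
  qed
  have wp: "w permutes {1..D}" unfolding permutes_altdef using bw by (auto simp: w_def)
  have injf: "inj_on f T" using f(1) bij_betw_def by blast
  have injg: "inj_on g T" using g(1) bij_betw_def by blast
  have psi: "psi n d w i j = m i j" for i j
  proof (cases "i \<in> {1..n} \<and> j \<in> {1..n}")
    case False thus ?thesis using Mmat_out[OF m] by (auto simp: psi_def)
  next
    case True
    hence i: "i \<in> {1..n}" and j: "j \<in> {1..n}" by auto
    have PT: "P i \<subseteq> T" unfolding P_def by auto
    have QT: "Q j \<subseteq> T" unfolding Q_def by auto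
    have fP: "f ` P i = block d i" using f(2) i by (simp add: bij_betw_def)
    have gQ: "g ` Q j = block d j" using g(2) j by (simp add: bij_betw_def)
    have "block d i \<subseteq> {1..D}" using block_sub[of i n d] i by (simp add: D_def dtot_ps)
    hence "w ` block d i = (g \<circ> inv_into T f) ` block d i"
      by (intro image_cong refl) (auto simp: w_def)
    hence "w ` block d i = g ` (inv_into T f ` block d i)" by (simp add: image_comp)
    also have "inv_into T f ` block d i = P i" using fP injf PT by (metis inv_into_image_cancel)
    finally have wB: "w ` block d i = g ` P i" .
    have "g ` P i \<inter> block d j = g ` (P i \<inter> Q j)"
    proof
      show "g ` (P i \<inter> Q j) \<subseteq> g ` P i \<inter> block d j" using gQ by auto
    next
      show "g ` P i \<inter> block d j \<subseteq> g ` (P i \<inter> Q j)"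
      proof
        fix y assume y: "y \<in> g ` P i \<inter> block d j"
        then obtain p where p: "p \<in> P i" "y = g p" by auto
        define j' where "j' = fst (snd p)"
        have pQ: "p \<in> Q j'" "j' \<in> {1..n}" using p PT unfolding Q_def j'_def T_def by auto
        have "g ` Q j' = block d j'" using g(2) pQ(2) by (simp add: bij_betw_def)
        hence "g p \<in> block d j'" using pQ(1) by blast
        hence "j' = j" using y p block_disj[of j' j d] pQ j by auto
        thus "y \<in> g ` (P i \<inter> Q j)" using p pQ by auto
      qed
    qed
    hence "psi n d w i j = card (g ` (P i \<inter> Q j))" using i j wB by (simp add: psi_def)
    also have "\<dots> = card (P i \<inter> Q j)" using injg PT by (intro card_image) (auto intro: inj_on_subset)
    also have "P i \<inter> Q j = (\<lambda>k. (i,j,k)) ` {..<m i j}" unfolding P_def Q_def T_def using i j by auto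
    also have "card \<dots> = m i j" by (subst card_image) (auto simp: inj_on_def)
    finally show ?thesis .
  qed
  show ?thesis using wp psi unfolding D_def by (intro exI[of _ w]) auto
qed


definition struct :: "nat \<Rightarrow> (nat \<Rightarrow> nat) \<Rightarrow> (nat \<Rightarrow> nat) \<Rightarrow> bool" where
  "struct n d w \<longleftrightarrow>
     (\<forall>i\<in>{1..n}. \<forall>x\<in>block d i. \<forall>y\<in>block d i. x < y \<longrightarrow> w y < w x) \<and>
     (\<forall>j\<in>{1..n}. \<forall>x\<in>{1..ps d n}. \<forall>y\<in>{1..ps d n}. w x \<in> block d j \<longrightarrow> w y \<in> block d j \<longrightarrow> x < y \<longrightarrow> w y < w x)"

lemma struct_src: "struct n d w \<Longrightarrow> i \<in> {1..n} \<Longrightarrow> x \<in> block d i \<Longrightarrow> y \<in> block d i \<Longrightarrow> x < y \<Longrightarrow> w y < w x"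
  unfolding struct_def by blast

lemma struct_tgt: "struct n d w \<Longrightarrow> j \<in> {1..n} \<Longrightarrow> x \<in> {1..ps d n} \<Longrightarrow> y \<in> {1..ps d n} \<Longrightarrow>
   w x \<in> block d j \<Longrightarrow> w y \<in> block d j \<Longrightarrow> x < y \<Longrightarrow> w y < w x"
  unfolding struct_def by blast

lemma psi_cong_img:
  assumes "\<And>i. i \<in> {1..n} \<Longrightarrow> \<forall>j\<in>{1..n}. card (w' ` block d i \<inter> block d j) = card (w ` block d i \<inter> block d j)"
  shows "psi n d w' = psi n d w"
  using assms by (auto simp: psi_def fun_eq_iff)

lemma block_of:
  assumes "z \<in> {1..ps d n}"
  shows "\<exists>j\<in>{1..n}. z \<in> block d j"
  using assms UN_blocks[of d n] by blast

lemma max_struct: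
  assumes w: "w permutes {1..ps d n}"
    and mx: "\<And>w'. w' permutes {1..ps d n} \<Longrightarrow> psi n d w' = psi n d w \<Longrightarrow> ninv (ps d n) w' \<le> ninv (ps d n) w"
  shows "struct n d w"
proof -
  let ?D = "ps d n"
  have src: "w y < w x" if i: "i \<in> {1..n}" and xy: "x \<in> block d i" "y \<in> block d i" "x < y" for i x y
  proof (rule ccontr)
    assume "\<not> w y < w x"
    moreover have "w x \<noteq> w y" using perm_inj[OF w] xy by force
    ultimately have lt: "w x < w y" by simp
    have xyD: "1 \<le> x" "y \<le> ?D" using block_sub[of i n d] i xy by auto
    define w' where "w' = w \<circ> transpose x y"
    have wp: "w' permutes {1..?D}" unfolding w'_def using w xy xyD block_sub[of i n d] i
      by (intro permutes_compose permutes_swap_id) auto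
    have gt: "ninv ?D w < ninv ?D w'" unfolding w'_def using ninv_swap_less[OF w xyD(1) xy(3) xyD(2) lt] .
    have img: "w' ` block d i' = w ` block d i'" if "i' \<in> {1..n}" for i'
    proof -
      have "x \<in> block d i' \<longleftrightarrow> y \<in> block d i'"
        using block_disj[of i i' d] i that xy by (cases "i = i'") auto
      hence e: "transpose x y ` block d i' = block d i'" by simp
      have "w' ` block d i' = w ` (transpose x y ` block d i')" unfolding w'_def by (rule image_comp[symmetric])
      thus ?thesis unfolding e .
    qed
    have "psi n d w' = psi n d w" by (rule psi_cong_img) (simp add: img)
    thus False using mx[OF wp] gt by simp
  qed
  have tgt: "w y < w x" if j: "j \<in> {1..n}" and xy: "x \<in> {1..?D}" "y \<in> {1..?D}"
     "w x \<in> block d j" "w y \<in> block d j" "x < y" for j x y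
  proof (rule ccontr)
    assume "\<not> w y < w x"
    moreover have "w x \<noteq> w y" using perm_inj[OF w] xy by force
    ultimately have lt: "w x < w y" by simp
    define w' where "w' = w \<circ> transpose x y"
    have wp: "w' permutes {1..?D}" unfolding w'_def using w xy
      by (intro permutes_compose permutes_swap_id) auto
    have gt: "ninv ?D w < ninv ?D w'" unfolding w'_def
      using ninv_swap_less[OF w _ xy(5) _ lt] xy by auto
    have comm: "w' = transpose (w x) (w y) \<circ> w"
    proof
      fix z
      show "w' z = (transpose (w x) (w y) \<circ> w) z"
      proof (cases "z = x \<or> z = y")
        case True thus ?thesis by (auto simp: w'_def)
      next
        case False
        hence "w z \<noteq> w x" "w z \<noteq> w y" using perm_inj[OF w] by blast+
        thus ?thesis using False by (simp add: w'_def)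
      qed
    qed
    let ?t = "transpose (w x) (w y)"
    have inv_blk: "?t ` block d j' = block d j'" if "j' \<in> {1..n}" for j'
    proof -
      have "w x \<in> block d j' \<longleftrightarrow> w y \<in> block d j'"
        using block_disj[of j j' d] j that xy by (cases "j = j'") auto
      thus ?thesis by simp
    qed
    have "card (w' ` block d i \<inter> block d j') = card (w ` block d i \<inter> block d j')"
      if "i \<in> {1..n}" "j' \<in> {1..n}" for i j'
    proof -
      have "w' ` block d i \<inter> block d j' = ?t ` (w ` block d i) \<inter> ?t ` block d j'"
        unfolding comm using inv_blk[OF that(2)] by (simp add: image_comp)
      also have "\<dots> = ?t ` (w ` block d i \<inter> block d j')" by (simp add: image_Int)
      finally show ?thesis by (simp add: card_image)
    qed
    hence "psi n d w' = psi n d w" by (intro psi_cong_img) auto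
    thus False using mx[OF wp] gt by simp
  qed
  show ?thesis unfolding struct_def using src tgt by blast
qed

lemma lower_count:
  fixes E :: "nat set"
  assumes sub: "E \<subseteq> {lo+1..lo+dd}" and cl: "\<And>z z'. z \<in> E \<Longrightarrow> lo < z' \<Longrightarrow> z' < z \<Longrightarrow> z' \<in> E"
  shows "card {z\<in>E. z \<le> lo + p} = min (card E) p"
proof -
  have E: "E = {lo+1..lo+card E}"
  proof (cases "E = {}")
    case True thus ?thesis by simp
  next
    case False
    have fin: "finite E" using sub finite_subset by blast
    define M where "M = Max E"
    have ME: "M \<in> E" using fin False by (simp add: M_def)
    have Mge: "z \<le> M" if "z \<in> E" for z using fin that by (simp add: M_def)
    have "E = {lo+1..M}"
    proof
      show "E \<subseteq> {lo+1..M}" using Mge sub by auto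
      show "{lo+1..M} \<subseteq> E"
      proof
        fix z assume "z \<in> {lo+1..M}"
        thus "z \<in> E" using cl[OF ME, of z] ME by (cases "z = M") auto
      qed
    qed
    moreover hence "card E = M - lo" by simp
    moreover have "lo < M" using ME sub by auto
    ultimately show ?thesis by simp
  qed
  have "{z\<in>E. z \<le> lo + p} = {lo+1..lo + min (card E) p}"
    by (subst E) auto
  thus ?thesis by simp
qed

lemma upper_count:
  fixes C :: "nat set"
  assumes sub: "C \<subseteq> {lo+1..hi}" and cl: "\<And>c c'. c \<in> C \<Longrightarrow> c < c' \<Longrightarrow> c' \<le> hi \<Longrightarrow> c' \<in> C"
    and th: "lo + 1 \<le> th" "th \<le> hi + 1"
  shows "card {c\<in>C. th \<le> c} = min (card C) (hi + 1 - th)"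
proof (cases "C = {}")
  case True thus ?thesis by simp
next
  case False
  have fin: "finite C" using sub finite_subset by blast
  define mn where "mn = Min C"
  have mC: "mn \<in> C" using fin False by (simp add: mn_def)
  have mle: "mn \<le> z" if "z \<in> C" for z using fin that by (simp add: mn_def)
  have C: "C = {mn..hi}"
  proof
    show "C \<subseteq> {mn..hi}" using mle sub by auto
    show "{mn..hi} \<subseteq> C"
    proof
      fix z assume "z \<in> {mn..hi}"
      thus "z \<in> C" using cl[OF mC, of z] mC by (cases "z = mn") auto
    qed
  qed
  have mhi: "mn \<le> hi" using mC sub by auto
  have "{c\<in>C. th \<le> c} = {max mn th..hi}" unfolding C by auto
  thus ?thesis unfolding C using mhi th by simp
qed

lemma R_add: "R w (x + p) t = R w x t + card {z \<in> {x+1..x+p}. t \<le> w z}"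
proof -
  have "{y \<in> {1..x+p}. t \<le> w y} = {y \<in> {1..x}. t \<le> w y} \<union> {z \<in> {x+1..x+p}. t \<le> w z}" by auto
  moreover have "{y \<in> {1..x}. t \<le> w y} \<inter> {z \<in> {x+1..x+p}. t \<le> w z} = {}" by auto
  ultimately show ?thesis unfolding R_def by (simp add: card_Un_disjoint)
qed

lemma formula1:
  assumes st: "struct n d w" and i: "i \<in> {1..n}" and p: "p \<le> d i"
  shows "R w (ps d (i-1) + p) t = min (R w (ps d (i-1)) t + p) (R w (ps d i) t)"
proof -
  define lo where "lo = ps d (i-1)"
  have psi: "ps d i = lo + d i" unfolding lo_def using ps_Suc[of d "i-1"] i by simp
  have blk: "block d i = {lo+1..lo + d i}" using block_eq[of i d] i psi lo_def by simp
  define E where "E = {z \<in> block d i. t \<le> w z}"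
  have sub: "E \<subseteq> {lo+1..lo+d i}" unfolding E_def blk by auto
  have cl: "z' \<in> E" if "z \<in> E" "lo < z'" "z' < z" for z z'
  proof -
    have "z' \<in> block d i" using that sub unfolding blk by auto
    moreover have "w z < w z'" using struct_src[OF st i \<open>z' \<in> block d i\<close> _ \<open>z' < z\<close>] that(1) unfolding E_def by auto
    ultimately show ?thesis using that unfolding E_def by auto
  qed
  have c1: "card {z \<in> {lo+1..lo+p}. t \<le> w z} = min (card E) p"
  proof -
    have "{z \<in> {lo+1..lo+p}. t \<le> w z} = {z\<in>E. z \<le> lo + p}" unfolding E_def blk using p by auto
    thus ?thesis using lower_count[OF sub cl] by simp
  qed
  have c2: "card {z \<in> {lo+1..lo+d i}. t \<le> w z} = card E" unfolding E_def blk ..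
  show ?thesis
    unfolding psi lo_def[symmetric] R_add c1 c2 by simp
qed

lemma formula2:
  assumes w: "w permutes {1..ps d n}" and st: "struct n d w" and j: "j \<in> {1..n}" and q: "q \<le> d j"
    and x: "x \<le> ps d n"
  shows "R w x (ps d (j-1) + 1 + q) = min (R w x (ps d j + 1) + (d j - q)) (R w x (ps d (j-1) + 1))"
proof -
  define lo where "lo = ps d (j-1)"
  define hi where "hi = ps d j"
  have pj: "hi = lo + d j" unfolding lo_def hi_def using ps_Suc[of d "j-1"] j by simp
  have blk: "block d j = {lo+1..hi}" using block_eq[of j d] j unfolding lo_def hi_def by simp
  define F where "F = {z \<in> {1..x}. w z \<in> block d j}"
  define C where "C = w ` F"
  have injw: "inj_on w A" for A using permutes_inj[OF w] by (auto simp: inj_def inj_on_def)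
  have subC: "C \<subseteq> {lo+1..hi}" unfolding C_def F_def blk by auto
  have hiD: "hi \<le> ps d n" unfolding hi_def using j by (intro ps_mono) auto
  have clC: "c' \<in> C" if c: "c \<in> C" "c < c'" "c' \<le> hi" for c c'
  proof -
    obtain z where z: "z \<in> F" "c = w z" using c unfolding C_def by auto
    have c'b: "c' \<in> block d j" using c subC unfolding blk by auto
    have c'D: "c' \<in> {1..ps d n}" using c'b block_sub[of j n d] j by auto
    define z' where "z' = inv w c'"
    have wz': "w z' = c'" unfolding z'_def using permutes_inverses(1)[OF w] by simp
    have z'D: "z' \<in> {1..ps d n}" unfolding z'_def using c'D permutes_in_image[OF permutes_inv[OF w]] by auto
    have zD: "z \<in> {1..ps d n}" using z x unfolding F_def by auto
    have "\<not> z < z'"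
    proof
      assume "z < z'"
      moreover have "w z \<in> block d j" using z(1) unfolding F_def by auto
      ultimately have "w z' < w z" using struct_tgt[OF st j zD z'D] c'b wz' by auto
      thus False using z wz' c by simp
    qed
    moreover have "z \<noteq> z'" using z wz' c by auto
    ultimately have "z' < z" by simp
    hence "z' \<in> F" using z z'D c'b wz' unfolding F_def by auto
    thus ?thesis using wz' unfolding C_def by auto
  qed
  have cntC: "card C \<le> d j" using card_mono[OF _ subC] pj by simp
  have key: "R w x th = R w x (hi + 1) + min (card C) (hi + 1 - th)" if th: "lo + 1 \<le> th" "th \<le> hi + 1" for th
  proof -
    have "R w x th = R w x (hi + 1) + card {y \<in> {1..x}. th \<le> w y \<and> w y < hi + 1}"
      using R_split th by blast
    also have "{y \<in> {1..x}. th \<le> w y \<and> w y < hi + 1} = {z\<in>F. th \<le> w z}"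
      unfolding F_def blk using th by auto
    also have "card {z\<in>F. th \<le> w z} = card {c\<in>C. th \<le> c}"
    proof -
      have "w ` {z\<in>F. th \<le> w z} = {c\<in>C. th \<le> c}" unfolding C_def by auto
      thus ?thesis using card_image[OF injw] by metis
    qed
    also have "\<dots> = min (card C) (hi + 1 - th)" using upper_count[OF subC clC th] by simp
    finally show ?thesis .
  qed
  have k1: "R w x (lo + 1 + q) = R w x (hi + 1) + min (card C) (d j - q)"
    using key[of "lo + 1 + q"] q pj by simp
  have k2: "R w x (lo + 1) = R w x (hi + 1) + card C"
    using key[of "lo + 1"] pj cntC by simp
  show ?thesis unfolding lo_def[symmetric] hi_def[symmetric] k1 k2 by simp
qed

lemma decompose:
  assumes "1 \<le> n" "x \<le> ps d n"
  shows "\<exists>i\<in>{1..n}. \<exists>p\<le>d i. x = ps d (i-1) + p"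
  using assms
proof (induction n)
  case 0 thus ?case by simp
next
  case (Suc n)
  show ?case
  proof (cases "n \<ge> 1 \<and> x \<le> ps d n")
    case True thus ?thesis using Suc.IH by fastforce
  next
    case False
    hence "ps d n \<le> x \<or> n = 0" by auto
    moreover have "x \<le> ps d n + d (Suc n)" using Suc.prems ps_Suc by simp
    ultimately have "x - ps d n \<le> d (Suc n) \<and> x = ps d (Suc n - 1) + (x - ps d n)"
      by auto
    thus ?thesis by (intro bexI[of _ "Suc n"]) auto
  qed
qed

lemma struct_mono:
  assumes w1: "w1 permutes {1..ps d n}" and w2: "w2 permutes {1..ps d n}"
    and s1: "struct n d w1" and s2: "struct n d w2"
    and bd: "\<And>k j0. k \<le> n \<Longrightarrow> j0 \<le> n \<Longrightarrow> R w1 (ps d k) (Suc (ps d j0)) \<le> R w2 (ps d k) (Suc (ps d j0))"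
  shows "tab (ps d n) w1 w2"
  unfolding tab_def
proof (intro allI impI ballI)
  fix x t assume x: "x \<le> ps d n" and t: "t \<in> {1..ps d n}"
  have n1: "1 \<le> n" using t by (cases n) auto
  have t1: "t - 1 \<le> ps d n" using t by auto
  obtain j q where jq: "j \<in> {1..n}" "q \<le> d j" "t - 1 = ps d (j-1) + q"
    using decompose[OF n1 t1] by blast
  have tq: "t = ps d (j-1) + 1 + q" using jq t by auto
  have A: "R w1 (ps d k) t \<le> R w2 (ps d k) t" if k: "k \<le> n" for k
  proof -
    have kD: "ps d k \<le> ps d n" using k by (rule ps_mono)
    have b1: "R w1 (ps d k) (ps d j + 1) \<le> R w2 (ps d k) (ps d j + 1)" using bd[OF k, of j] jq by auto
    have b2: "R w1 (ps d k) (ps d (j-1) + 1) \<le> R w2 (ps d k) (ps d (j-1) + 1)" using bd[OF k, of "j-1"] jq by auto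
    show ?thesis unfolding tq formula2[OF w1 s1 jq(1,2) kD] formula2[OF w2 s2 jq(1,2) kD]
      using b1 b2 by auto
  qed
  obtain i p where ip: "i \<in> {1..n}" "p \<le> d i" "x = ps d (i-1) + p"
    using decompose[OF n1 x] by auto
  have a1: "R w1 (ps d (i-1)) t \<le> R w2 (ps d (i-1)) t" using A[of "i-1"] ip by auto
  have a2: "R w1 (ps d i) t \<le> R w2 (ps d i) t" using A[of i] ip by auto
  show "R w1 x t \<le> R w2 x t" unfolding ip(3) formula1[OF s1 ip(1,2)] formula1[OF s2 ip(1,2)]
    using a1 a2 by auto
qed

lemma R_det:
  assumes w1: "w1 permutes {1..D}" and w2: "w2 permutes {1..D}"
    and eq: "\<And>x t. x \<le> D \<Longrightarrow> t \<in> {1..D} \<Longrightarrow> R w1 x t = R w2 x t"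
  shows "w1 = w2"
proof
  fix x show "w1 x = w2 x"
  proof (cases "x \<in> {1..D}")
    case False thus ?thesis using w1 w2 by (metis permutes_not_in)
  next
    case True
    have ind: "(t \<le> w1 x) = (t \<le> w2 x)" if t: "t \<in> {1..D}" for t
    proof -
      have x1: "Suc (x - 1) = x" using True by simp
      have a: "R w1 x t = R w1 (x-1) t + (if t \<le> w1 x then 1 else 0)"
        using R_Suc[of w1 "x-1" t] unfolding x1 .
      have b: "R w2 x t = R w2 (x-1) t + (if t \<le> w2 x then 1 else 0)"
        using R_Suc[of w2 "x-1" t] unfolding x1 .
      have c: "R w1 x t = R w2 x t" using eq[of x t] True t by auto
      have d: "R w1 (x-1) t = R w2 (x-1) t" using eq[of "x-1" t] True t by auto
      show ?thesis
      proof (cases "t \<le> w1 x")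
        case True1: True
        show ?thesis
        proof (cases "t \<le> w2 x")
          case True thus ?thesis using True1 by simp
        next
          case False thus ?thesis using a b c d True1 by simp
        qed
      next
        case False1: False
        show ?thesis
        proof (cases "t \<le> w2 x")
          case True thus ?thesis using a b c d False1 by simp
        next
          case False thus ?thesis using False1 by simp
        qed
      qed
    qed
    have "w1 x \<le> w2 x" using ind[of "w1 x"] perm_in[OF w1 True] by simp
    moreover have "w2 x \<le> w1 x" using ind[of "w2 x"] perm_in[OF w2 True] by simp
    ultimately show ?thesis by simp
  qed
qed

lemma R_top:
  assumes w: "w permutes {1..D}" and x: "x \<le> D"
  shows "R w x (Suc D) = 0"
proof -
  have "{y \<in> {1..x}. Suc D \<le> w y} = {}" using perm_in[OF w] x by fastforce
  thus ?thesis by (simp add: R_def)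
qed

lemma bnd_all:
  assumes w: "w permutes {1..ps d n}" and k: "k \<le> n" and j0: "j0 \<le> n"
  shows "R w (ps d k) (Suc (ps d j0)) = (if j0 < n then psum n (psi n d w) k (Suc j0) else 0)"
proof (cases "j0 < n")
  case True
  have "R w (ps d k) (Suc (ps d (Suc j0 - 1))) = psum n (psi n d w) k (Suc j0)"
    using boundary[of w n d k "Suc j0"] w k True by (simp add: dtot_ps)
  thus ?thesis using True by simp
next
  case False
  hence "j0 = n" using j0 by simp
  thus ?thesis using R_top[OF w, of "ps d k"] ps_mono[OF k, of d] by simp
qed


lemma longest_props:
  assumes m: "m \<in> Mmat n d"
  shows "longest n d m permutes {1..ps d n} \<and> psi n d (longest n d m) = m \<and> struct n d (longest n d m)"
proof -
  define D where "D = dtot n d"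
  have DD: "D = ps d n" by (simp add: D_def dtot_ps)
  define A where "A = dcoset n d m"
  have finA: "finite A"
  proof (rule finite_subset)
    show "A \<subseteq> {p. p permutes {1..D}}" unfolding A_def dcoset_def D_def by blast
    show "finite {p. p permutes {1..D}}" by (rule finite_permutations) simp
  qed
  have neA: "A \<noteq> {}" using dcoset_exists[OF m] unfolding A_def dcoset_def by blast
  define P where "P w \<longleftrightarrow> w \<in> A \<and> (\<forall>w'\<in>A. coxlen D w' \<le> coxlen D w)" for w
  obtain w0 where w0: "P w0"
  proof -
    have "Max (coxlen D ` A) \<in> coxlen D ` A" using finA neA by simp
    then obtain w0 where "w0 \<in> A" "coxlen D w0 = Max (coxlen D ` A)" by auto
    moreover have "\<forall>w'\<in>A. coxlen D w' \<le> Max (coxlen D ` A)" using finA by simp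
    ultimately have "P w0" unfolding P_def by auto
    thus ?thesis by (rule that)
  qed
  have PA: "P w \<Longrightarrow> w permutes {1..ps d n} \<and> psi n d w = m" for w
    unfolding P_def A_def dcoset_def using dtot_ps[of n d] by simp
  have Pst: "struct n d w" if Pw: "P w" for w
  proof (rule max_struct)
    show wp: "w permutes {1..ps d n}" using PA[OF Pw] by simp
    fix w' assume w'p: "w' permutes {1..ps d n}" and ps: "psi n d w' = psi n d w"
    hence "w' \<in> A" using PA[OF Pw] dtot_ps[of n d] unfolding A_def dcoset_def by simp
    hence "coxlen D w' \<le> coxlen D w" using Pw unfolding P_def by blast
    thus "ninv (ps d n) w' \<le> ninv (ps d n) w" using coxlen_eq[OF w'p] coxlen_eq[OF wp] DD by simp
  qed
  have uniq: "w1 = w2" if P1: "P w1" and P2: "P w2" for w1 w2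
  proof -
    have p1: "w1 permutes {1..ps d n}" "psi n d w1 = m" using PA[OF P1] by auto
    have p2: "w2 permutes {1..ps d n}" "psi n d w2 = m" using PA[OF P2] by auto
    have bd: "R w1 (ps d k) (Suc (ps d j0)) = R w2 (ps d k) (Suc (ps d j0))" if "k \<le> n" "j0 \<le> n" for k j0
      using bnd_all[OF p1(1) that] bnd_all[OF p2(1) that] p1(2) p2(2) by simp
    have t12: "tab (ps d n) w1 w2" by (rule struct_mono[OF p1(1) p2(1) Pst[OF P1] Pst[OF P2]]) (simp add: bd)
    have t21: "tab (ps d n) w2 w1" by (rule struct_mono[OF p2(1) p1(1) Pst[OF P2] Pst[OF P1]]) (simp add: bd)
    have eqR: "R w1 x t = R w2 x t" if "x \<le> ps d n" "t \<in> {1..ps d n}" for x t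
      using t12 t21 that unfolding tab_def by (meson order.antisym)
    show ?thesis by (rule R_det[OF p1(1) p2(1) eqR])
  qed
  have "longest n d m = w0"
    unfolding longest_def D_def[symmetric] A_def[symmetric] P_def[symmetric]
  proof (rule the_equality)
    show "P w0" by (rule w0)
  next
    fix w assume "P w" thus "w = w0" by (rule uniq[OF _ w0])
  qed
  thus ?thesis using PA[OF w0] Pst[OF w0] by simp
qed

lemma mat_le_psum:
  assumes m: "m \<in> Mmat n d" and m': "m' \<in> Mmat n d" and le: "mat_le n d m m'"
    and k: "k \<in> {1..n}" and j: "j \<in> {1..n}"
  shows "psum n m k j \<le> psum n m' k j"
proof -
  note L = longest_props[OF m] and L' = longest_props[OF m']
  have "bruhat_le (ps d n) (longest n d m) (longest n d m')" using le by (simp add: mat_le_def dtot_ps)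
  hence R: "R (longest n d m) x t \<le> R (longest n d m') x t" for x t
    using bruhat_le_R L by blast
  have "psum n m k j = R (longest n d m) (ps d k) (Suc (ps d (j - 1)))"
    using boundary[of "longest n d m" n d k j] L k j by (simp add: dtot_ps)
  also have "\<dots> \<le> R (longest n d m') (ps d k) (Suc (ps d (j - 1)))" by (rule R)
  also have "\<dots> = psum n m' k j"
    using boundary[of "longest n d m'" n d k j] L' k j by (simp add: dtot_ps)
  finally show ?thesis .
qed

lemma part1:
  assumes m: "m \<in> Mprime n d" and m': "m' \<in> Mmat n d" and le: "mat_le n d m' m"
  shows "m' \<in> Mprime n d"
proof -
  have mm: "m \<in> Mmat n d" using m by (simp add: Mprime_def)
  have "m' r c = 0" if r: "r \<in> {1..n}" and c: "c \<in> {1..n}" and rc: "c + 1 < r" for r c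
  proof -
    define k where "k = r - 1"
    define j where "j = c + 1"
    have kj: "k \<in> {1..n}" "j \<in> {1..n}" "k \<le> n" "1 \<le> j" "j \<le> Suc n"
      using r c rc by (auto simp: k_def j_def)
    have ps: "psum n m' k j \<le> psum n m k j" using mat_le_psum[OF m' mm le kj(1,2)] .
    have Q: "(\<Sum>i=Suc k..n. \<Sum>j'=1..<j. m i j') = 0"
      using kj rc by (auto intro!: sum.neutral Mprime_zero[OF m] simp: k_def j_def)
    have e1: "psum n m k j + (\<Sum>j'=1..<j. d j') = (\<Sum>i=1..k. d i)"
      using key_identity[OF mm kj(3-5)] Q by simp
    have e2: "psum n m' k j + (\<Sum>j'=1..<j. d j') = (\<Sum>i=1..k. d i) + (\<Sum>i=Suc k..n. \<Sum>j'=1..<j. m' i j')"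
      using key_identity[OF m' kj(3-5)] .
    have "(\<Sum>i=Suc k..n. \<Sum>j'=1..<j. m' i j') = 0" using e1 e2 ps by linarith
    hence "\<forall>i\<in>{Suc k..n}. \<forall>j'\<in>{1..<j}. m' i j' = 0" by simp
    moreover have "r \<in> {Suc k..n}" "c \<in> {1..<j}" using r c rc by (auto simp: k_def j_def)
    ultimately show ?thesis by blast
  qed
  thus ?thesis using m' by (auto simp: Mprime_def)
qed

lemma part3:
  assumes m: "m \<in> Mprime n d" and m': "m' \<in> Mprime n d"
  shows "mat_le n d m m' \<longleftrightarrow> (\<forall>i\<in>{1..n}. \<forall>j\<in>{1..n}. i < j \<longrightarrow> psum n m i j \<le> psum n m' i j)"
proof
  assume "mat_le n d m m'"
  thus "\<forall>i\<in>{1..n}. \<forall>j\<in>{1..n}. i < j \<longrightarrow> psum n m i j \<le> psum n m' i j"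
    using mat_le_psum[OF Mprime_Mmat[OF m] Mprime_Mmat[OF m']] by blast
next
  assume H: "\<forall>i\<in>{1..n}. \<forall>j\<in>{1..n}. i < j \<longrightarrow> psum n m i j \<le> psum n m' i j"
  note L = longest_props[OF Mprime_Mmat[OF m]] and L' = longest_props[OF Mprime_Mmat[OF m']]
  have bd: "R (longest n d m) (ps d k) (Suc (ps d j0)) \<le> R (longest n d m') (ps d k) (Suc (ps d j0))"
    if k: "k \<le> n" and j0: "j0 \<le> n" for k j0
  proof (cases "j0 < n")
    case False thus ?thesis using bnd_all[of "longest n d m" d n k j0] bnd_all[of "longest n d m'" d n k j0] L L' k j0 by simp
  next
    case True
    have "psum n m k (Suc j0) \<le> psum n m' k (Suc j0)"
    proof (cases "k = 0")
      case True thus ?thesis by (simp add: psum_def)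
    next
      case False
      show ?thesis
      proof (cases "k < Suc j0")
        case True thus ?thesis using H \<open>k \<noteq> 0\<close> k \<open>j0 < n\<close> by auto
      next
        case False
        thus ?thesis using part2[OF m, of "Suc j0" k] part2[OF m', of "Suc j0" k] k by simp
      qed
    qed
    thus ?thesis using bnd_all[of "longest n d m" d n k j0] bnd_all[of "longest n d m'" d n k j0] L L' k j0 True by simp
  qed
  have "tab (ps d n) (longest n d m) (longest n d m')"
    using struct_mono[of "longest n d m" d n "longest n d m'"] L L' bd by blast
  hence "bruhat_le (ps d n) (longest n d m) (longest n d m')"
    using tab_bruhat L L' by blast
  thus "mat_le n d m m'" by (simp add: mat_le_def dtot_ps)
qed

theorem proposition3p1:
  fixes n :: nat and d :: "nat \<Rightarrow> nat"
  shows "(\<forall>m\<in>Mprime n d. \<forall>m'\<in>Mmat n d. mat_le n d m' m \<longrightarrow> m' \<in> Mprime n d)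
    \<and> (\<forall>m\<in>Mprime n d. \<forall>i\<in>{1..n}. \<forall>j\<in>{1..n}. j \<le> i \<longrightarrow> psum n m i j = (\<Sum>k=j..i. d k))
    \<and> (\<forall>m\<in>Mprime n d. \<forall>m'\<in>Mprime n d. mat_le n d m m' \<longleftrightarrow>
          (\<forall>i\<in>{1..n}. \<forall>j\<in>{1..n}. i < j \<longrightarrow> psum n m i j \<le> psum n m' i j))
    \<and> (\<forall>m\<in>Mprime n d. \<forall>i\<in>{2..n}. m i (i - 1) = psum n m (i - 1) i)
    \<and> bij_betw (Phi n) (Mseg n d) (Mprime n d)"
proof (intro conjI)
  show "\<forall>m\<in>Mprime n d. \<forall>m'\<in>Mmat n d. mat_le n d m' m \<longrightarrow> m' \<in> Mprime n d"
    using part1 by blast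
  show "\<forall>m\<in>Mprime n d. \<forall>i\<in>{1..n}. \<forall>j\<in>{1..n}. j \<le> i \<longrightarrow> psum n m i j = (\<Sum>k=j..i. d k)"
  proof (intro ballI impI)
    fix m i j assume "m \<in> Mprime n d" "i \<in> {1..n}" "j \<in> {1..n}" "j \<le> i"
    thus "psum n m i j = (\<Sum>k=j..i. d k)" using part2[of m n d j i] by simp
  qed
  show "\<forall>m\<in>Mprime n d. \<forall>m'\<in>Mprime n d. mat_le n d m m' \<longleftrightarrow>
          (\<forall>i\<in>{1..n}. \<forall>j\<in>{1..n}. i < j \<longrightarrow> psum n m i j \<le> psum n m' i j)"
    using part3 by blast
  show "\<forall>m\<in>Mprime n d. \<forall>i\<in>{2..n}. m i (i - 1) = psum n m (i - 1) i"
  proof (intro ballI)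
    fix m i assume "m \<in> Mprime n d" "i \<in> {2..n}"
    thus "m i (i - 1) = psum n m (i - 1) i" using part4[of m n d i] by simp
  qed
  show "bij_betw (Phi n) (Mseg n d) (Mprime n d)" by (rule part5)
qed


end
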